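(* In the compactification setting described in the context, assume the Reduced Energy Condition holds and let $\sigma\ge 0$ be a constant with $(D-2)|\mathrm{d}A|_{\bar g}\le \sigma$ everywhere on $M_n$. Then on $M_n$ one has the identity $$\bar R_{mn}-(D-2)\bar\nabla_m\bar\nabla_n A=\Lambda\,\bar g_{mn}-(D-2)\,\partial_mA\,\partial_nA+\tfrac{\kappa^2}{2}\Big(T_{mn}-\tfrac1d\,\bar g_{mn}\,T^{(d)}\Big),$$ and consequently the Bakry–Émery Ricci tensor with weight $f=(D-2)A$ satisfies $$\mathrm{Ric}_{\bar g}-\mathrm{Hess}_{\bar g}f\ \geq\ -\Big(|\Lambda|+\frac{\sigma^2}{D-2}\Big)\bar g$$ as symmetric 2-tensors on $M_n$.
   Context: Setting (compactification). Let $D=d+n$ with $d\ge 2$, $n\ge 2$. Let $(M_n,\bar g)$ be a smooth connected Riemannian manifold and $A\in C^\infty(M_n)$ (the warping function). Let $(X_d,g^{(d)})$ be a $d$-dimensional Lorentzian maximally symmetric space with $\mathrm{Ric}(g^{(d)})=\Lambda g^{(d)}$, $\Lambda<0$. On $X_d\times M_n$ consider the $D$-dimensional metric $g_D=e^{2A}\,(g^{(d)}+\bar g)$. Greek indices $\mu,\nu$ refer to $X_d$, Latin $m,n$ to $M_n$, capital $M,N$ to all directions. Assume $g_D$ satisfies the Einstein equations $R_{MN}=\frac{\kappa^2}{2}\big(T_{MN}-g_{MN}\frac{T}{D-2}\big)$ for some symmetric 2-tensor $T_{MN}$ (the stress-energy tensor), with $T=g_D^{MN}T_{MN}$ and $\kappa>0$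 a constant. Set $T^{(d)}:=(g^{(d)})^{\mu\nu}T_{\mu\nu}$ (trace with the unwarped metric $g^{(d)}$). $\bar R_{mn}$ and $\bar\nabla$ denote the Ricci tensor and Levi-Civita connection of $\bar g$. Reduced Energy Condition (REC): the symmetric 2-tensor $T_{mn}-\frac1d\bar g_{mn}T^{(d)}$ on $M_n$ is positive semidefinite at every point. *)

theory Defs
  imports "HOL-Analysis.Analysis"
begin

text \<open>Local-coordinate differential geometry. A metric on an open coordinate
domain U in real^'k is a matrix-valued function G, with components G x $ a $ b.\<close>

definition pd :: "'k::finite \<Rightarrow> (real^'k \<Rightarrow> real) \<Rightarrow> real^'k \<Rightarrow> real" where
  "pd i f x = deriv (\<lambda>t. f (x + t *\<^sub>R axis i 1)) 0"

primrec pds :: "'k::finite list \<Rightarrow> (real^'k \<Rightarrow> real) \<Rightarrow> real^'k \<Rightarrow> real" where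
  "pds [] f = f"
| "pds (i # is) f = pd i (pds is f)"

definition coord_smooth_on :: "(real^'k::finite) set \<Rightarrow> (real^'k \<Rightarrow> real) \<Rightarrow> bool" where
  "coord_smooth_on U f \<longleftrightarrow> (\<forall>is. \<forall>x\<in>U. pds is f differentiable (at x))"

definition smooth_metric_on :: "(real^'k::finite) set \<Rightarrow> (real^'k \<Rightarrow> real^'k^'k) \<Rightarrow> bool" where
  "smooth_metric_on U G \<longleftrightarrow> (\<forall>a b. coord_smooth_on U (\<lambda>x. G x $ a $ b))"

definition sym_mat :: "real^'k^'k \<Rightarrow> bool" where
  "sym_mat M \<longleftrightarrow> transpose M = M"

definition pos_def_mat :: "real^'k::finite^'k \<Rightarrow> bool" where
  "pos_def_mat M \<longleftrightarrow> (\<forall>v. v \<noteq> 0 \<longrightarrow> v \<bullet> (M *v v) > 0)"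

definition psd_form :: "('k::finite \<Rightarrow> 'k \<Rightarrow> real) \<Rightarrow> bool" where
  "psd_form S \<longleftrightarrow> (\<forall>v::real^'k. (\<Sum>a\<in>UNIV. \<Sum>b\<in>UNIV. v $ a * S a b * v $ b) \<ge> 0)"

definition riemannian_on :: "(real^'k::finite) set \<Rightarrow> (real^'k \<Rightarrow> real^'k^'k) \<Rightarrow> bool" where
  "riemannian_on U G \<longleftrightarrow> smooth_metric_on U G \<and>
     (\<forall>x\<in>U. sym_mat (G x) \<and> pos_def_mat (G x))"

text \<open>Lorentzian: symmetric, of signature (-,+,...,+) (Sylvester normal form).\<close>
definition lorentzian_on :: "(real^'k::finite) set \<Rightarrow> (real^'k \<Rightarrow> real^'k^'k) \<Rightarrow> bool" where
  "lorentzian_on U G \<longleftrightarrow> smooth_metric_on U G \<and>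
     (\<forall>x\<in>U. sym_mat (G x) \<and>
        (\<exists>(P::real^'k^'k) i0. invertible P \<and>
           transpose P ** G x ** P = (\<chi> a b. if a = b then (if a = i0 then -1 else 1) else 0)))"

definition christoffel :: "(real^'k::finite \<Rightarrow> real^'k^'k) \<Rightarrow> 'k \<Rightarrow> 'k \<Rightarrow> 'k \<Rightarrow> real^'k \<Rightarrow> real" where
  "christoffel G a b c x = (\<Sum>e\<in>UNIV. matrix_inv (G x) $ a $ e *
      (pd b (\<lambda>y. G y $ e $ c) x + pd c (\<lambda>y. G y $ e $ b) x - pd e (\<lambda>y. G y $ b $ c) x)) / 2"

definition riemann :: "(real^'k::finite \<Rightarrow> real^'k^'k) \<Rightarrow> 'k \<Rightarrow> 'k \<Rightarrow> 'k \<Rightarrow> 'k \<Rightarrow> real^'k \<Rightarrow> real" where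
  "riemann G a b c d x =
     pd c (christoffel G a d b) x - pd d (christoffel G a c b) x
     + (\<Sum>e\<in>UNIV. christoffel G a c e x * christoffel G e d b x
                 - christoffel G a d e x * christoffel G e c b x)"

definition riemann_low :: "(real^'k::finite \<Rightarrow> real^'k^'k) \<Rightarrow> 'k \<Rightarrow> 'k \<Rightarrow> 'k \<Rightarrow> 'k \<Rightarrow> real^'k \<Rightarrow> real" where
  "riemann_low G a b c d x = (\<Sum>e\<in>UNIV. G x $ a $ e * riemann G e b c d x)"

definition ricci :: "(real^'k::finite \<Rightarrow> real^'k^'k) \<Rightarrow> 'k \<Rightarrow> 'k \<Rightarrow> real^'k \<Rightarrow> real" where
  "ricci G b d x = (\<Sum>a\<in>UNIV. riemann G a b a d x)"

definition hess :: "(real^'k::finite \<Rightarrow> real^'k^'k) \<Rightarrow> (real^'k \<Rightarrow> real) \<Rightarrow> 'k \<Rightarrow> 'k \<Rightarrow> real^'k \<Rightarrow> real" where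
  "hess G f a b x = pd a (pd b f) x - (\<Sum>c\<in>UNIV. christoffel G c a b x * pd c f x)"

definition grad_norm :: "(real^'k::finite \<Rightarrow> real^'k^'k) \<Rightarrow> (real^'k \<Rightarrow> real) \<Rightarrow> real^'k \<Rightarrow> real" where
  "grad_norm G f x = sqrt (\<Sum>a\<in>UNIV. \<Sum>b\<in>UNIV. matrix_inv (G x) $ a $ b * pd a f x * pd b f x)"

text \<open>Coordinates on X_d x M_n: index type 'd + 'n.\<close>
definition ypart :: "real^('d::finite + 'n::finite) \<Rightarrow> real^'d" where
  "ypart z = (\<chi> i. z $ Inl i)"

definition xpart :: "real^('d::finite + 'n::finite) \<Rightarrow> real^'n" where
  "xpart z = (\<chi> j. z $ Inr j)"

definition prod_dom :: "(real^'d::finite) set \<Rightarrow> (real^'n::finite) set \<Rightarrow> (real^('d + 'n)) set" where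
  "prod_dom U V = {z. ypart z \<in> U \<and> xpart z \<in> V}"

definition warped_metric ::
  "(real^'d::finite \<Rightarrow> real^'d^'d) \<Rightarrow> (real^'n::finite \<Rightarrow> real^'n^'n) \<Rightarrow> (real^'n \<Rightarrow> real)
     \<Rightarrow> real^('d + 'n) \<Rightarrow> real^('d + 'n)^('d + 'n)" where
  "warped_metric gd gb A z = (\<chi> M N. exp (2 * A (xpart z)) *
      (case (M, N) of
         (Inl \<mu>, Inl \<nu>) \<Rightarrow> gd (ypart z) $ \<mu> $ \<nu>
       | (Inr m, Inr n) \<Rightarrow> gb (xpart z) $ m $ n
       | _ \<Rightarrow> 0))"

definition trace_wrt :: "real^'k::finite^'k \<Rightarrow> real^'k^'k \<Rightarrow> real" where
  "trace_wrt G T = (\<Sum>a\<in>UNIV. \<Sum>b\<in>UNIV. matrix_inv G $ a $ b * T $ a $ b)"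

definition trace_d :: "real^'d::finite^'d \<Rightarrow> real^('d + 'n::finite)^('d + 'n) \<Rightarrow> real" where
  "trace_d gdy T = (\<Sum>\<mu>\<in>UNIV. \<Sum>\<nu>\<in>UNIV. matrix_inv gdy $ \<mu> $ \<nu> * T $ Inl \<mu> $ Inl \<nu>)"

end

theory Submission
  imports Defs
begin

lemma pd_hasderiv:
  fixes f :: "real^'k::finite \<Rightarrow> real"
  assumes "(f has_derivative f') (at x)"
  shows "pd i f x = f' (axis i 1)"
proof -
  have l: "((\<lambda>t::real. x + t *\<^sub>R axis i 1) has_derivative (\<lambda>t. t *\<^sub>R axis i 1)) (at 0)"
    by (auto intro!: derivative_eq_intros)
  have a: "(f has_derivative f') (at (x + 0 *\<^sub>R axis i 1))" using assms by simp
  have "((\<lambda>t. f (x + t *\<^sub>R axis i 1)) has_derivative (\<lambda>t. f' (t *\<^sub>R axis i 1))) (at 0)"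
    using has_derivative_compose[OF l a] by simp
  moreover have "(\<lambda>t. f' (t *\<^sub>R axis i 1)) = (\<lambda>t. f' (axis i 1) * t)"
    using has_derivative_bounded_linear[OF assms]
    by (auto simp: linear_simps bounded_linear.linear linear_scale)
  ultimately have "((\<lambda>t. f (x + t *\<^sub>R axis i 1)) has_real_derivative f' (axis i 1)) (at 0)"
    by (simp add: has_field_derivative_def)
  then show ?thesis by (simp add: pd_def DERIV_imp_deriv)
qed

lemma pd_frechet:
  fixes f :: "real^'k::finite \<Rightarrow> real"
  assumes "f differentiable (at x)"
  shows "pd i f x = frechet_derivative f (at x) (axis i 1)"
  using assms frechet_derivative_works pd_hasderiv by metis

lemma pd_cong_open:
  fixes f g :: "real^'k::finite \<Rightarrow> real"
  assumes "open S" "x \<in> S" "\<And>y. y \<in> S \<Longrightarrow> f y = g y"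
  shows "pd i f x = pd i g x"
proof -
  obtain e where e: "e > 0" "ball x e \<subseteq> S" using assms(1,2) open_contains_ball by blast
  have "\<forall>t::real. dist t 0 < e \<longrightarrow> f (x + t *\<^sub>R axis i 1) = g (x + t *\<^sub>R axis i 1)"
  proof (intro allI impI)
    fix t :: real assume "dist t 0 < e"
    then have "x + t *\<^sub>R axis i 1 \<in> ball x e" by (simp add: dist_norm)
    then show "f (x + t *\<^sub>R axis i 1) = g (x + t *\<^sub>R axis i 1)" using e assms(3) by blast
  qed
  then have "eventually (\<lambda>t. f (x + t *\<^sub>R axis i 1) = g (x + t *\<^sub>R axis i 1)) (nhds (0::real))"
    unfolding eventually_nhds_metric using e(1) by blast
  then show ?thesis unfolding pd_def by (rule deriv_cong_ev) simp
qed

lemma pd_const[simp]: "pd i (\<lambda>x. c) x = 0"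
  by (simp add: pd_def)

lemma pd_add:
  fixes f g :: "real^'k::finite \<Rightarrow> real"
  assumes "f differentiable (at x)" "g differentiable (at x)"
  shows "pd i (\<lambda>x. f x + g x) x = pd i f x + pd i g x"
proof -
  obtain f' g' where f: "(f has_derivative f') (at x)" and g: "(g has_derivative g') (at x)"
    using assms by (auto simp: differentiable_def)
  have "((\<lambda>x. f x + g x) has_derivative (\<lambda>v. f' v + g' v)) (at x)"
    using f g by (rule has_derivative_add)
  from pd_hasderiv[OF this] show ?thesis using pd_hasderiv[OF f] pd_hasderiv[OF g] by simp
qed

lemma pd_diff:
  fixes f g :: "real^'k::finite \<Rightarrow> real"
  assumes "f differentiable (at x)" "g differentiable (at x)"
  shows "pd i (\<lambda>x. f x - g x) x = pd i f x - pd i g x"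
proof -
  obtain f' g' where f: "(f has_derivative f') (at x)" and g: "(g has_derivative g') (at x)"
    using assms by (auto simp: differentiable_def)
  have "((\<lambda>x. f x - g x) has_derivative (\<lambda>v. f' v - g' v)) (at x)"
    using f g by (rule has_derivative_diff)
  from pd_hasderiv[OF this] show ?thesis using pd_hasderiv[OF f] pd_hasderiv[OF g] by simp
qed

lemma pd_minus:
  fixes f :: "real^'k::finite \<Rightarrow> real"
  assumes "f differentiable (at x)"
  shows "pd i (\<lambda>x. - f x) x = - pd i f x"
proof -
  obtain f' where f: "(f has_derivative f') (at x)"
    using assms by (auto simp: differentiable_def)
  have "((\<lambda>x. - f x) has_derivative (\<lambda>v. - f' v)) (at x)"
    using f by (rule has_derivative_minus)
  from pd_hasderiv[OF this] show ?thesis using pd_hasderiv[OF f] by simp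
qed

lemma pd_mult:
  fixes f g :: "real^'k::finite \<Rightarrow> real"
  assumes "f differentiable (at x)" "g differentiable (at x)"
  shows "pd i (\<lambda>x. f x * g x) x = pd i f x * g x + f x * pd i g x"
proof -
  obtain f' g' where f: "(f has_derivative f') (at x)" and g: "(g has_derivative g') (at x)"
    using assms by (auto simp: differentiable_def)
  have "((\<lambda>x. f x * g x) has_derivative (\<lambda>v. f x * g' v + f' v * g x)) (at x)"
    using f g by (rule has_derivative_mult)
  from pd_hasderiv[OF this] show ?thesis using pd_hasderiv[OF f] pd_hasderiv[OF g] by simp
qed

lemma pd_cmult:
  fixes f :: "real^'k::finite \<Rightarrow> real"
  assumes "f differentiable (at x)"
  shows "pd i (\<lambda>x. c * f x) x = c * pd i f x"
  using pd_mult[OF differentiable_const assms] by simp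

lemma pd_multc:
  fixes f :: "real^'k::finite \<Rightarrow> real"
  assumes "f differentiable (at x)"
  shows "pd i (\<lambda>x. f x * c) x = pd i f x * c"
  using pd_mult[OF assms differentiable_const] by simp

lemma pd_sum:
  fixes f :: "'a \<Rightarrow> real^'k::finite \<Rightarrow> real"
  assumes "finite S" "\<And>a. a \<in> S \<Longrightarrow> f a differentiable (at x)"
  shows "pd i (\<lambda>x. \<Sum>a\<in>S. f a x) x = (\<Sum>a\<in>S. pd i (f a) x)"
  using assms
proof (induction S rule: finite_induct)
  case empty then show ?case by simp
next
  case (insert a S)
  have "pd i (\<lambda>x. \<Sum>a\<in>insert a S. f a x) x = pd i (\<lambda>x. f a x + (\<Sum>a\<in>S. f a x)) x"
    using insert by simp
  also have "\<dots> = pd i (f a) x + pd i (\<lambda>x. \<Sum>a\<in>S. f a x) x"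
    using insert by (intro pd_add) (auto intro!: differentiable_sum)
  finally show ?case using insert by simp
qed

lemma line_deriv:
  fixes f :: "real^'k::finite \<Rightarrow> real"
  assumes "f differentiable (at (p + s *\<^sub>R axis i 1))"
  shows "((\<lambda>t. f (p + t *\<^sub>R axis i 1)) has_real_derivative pd i f (p + s *\<^sub>R axis i 1)) (at s)"
proof -
  obtain f' where f: "(f has_derivative f') (at (p + s *\<^sub>R axis i 1))"
    using assms by (auto simp: differentiable_def)
  have l: "((\<lambda>t::real. p + t *\<^sub>R axis i 1) has_derivative (\<lambda>t. t *\<^sub>R axis i 1)) (at s)"
    by (auto intro!: derivative_eq_intros)
  have "((\<lambda>t. f (p + t *\<^sub>R axis i 1)) has_derivative (\<lambda>t. f' (t *\<^sub>R axis i 1))) (at s)"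
    using has_derivative_compose[OF l f] by simp
  moreover have "(\<lambda>t. f' (t *\<^sub>R axis i 1)) = (\<lambda>t. f' (axis i 1) * t)"
    using has_derivative_bounded_linear[OF f]
    by (auto simp: linear_simps bounded_linear.linear linear_scale)
  ultimately show ?thesis using pd_hasderiv[OF f, of i]
    by (simp add: has_field_derivative_def)
qed

definition sdelta :: "(real^'k::finite \<Rightarrow> real) \<Rightarrow> real^'k \<Rightarrow> 'k \<Rightarrow> 'k \<Rightarrow> real \<Rightarrow> real" where
  "sdelta f x i j h = f (x + h *\<^sub>R axis i 1 + h *\<^sub>R axis j 1) - f (x + h *\<^sub>R axis i 1)
      - f (x + h *\<^sub>R axis j 1) + f x"

lemma sdelta_sym: "sdelta f x i j h = sdelta f x j i h"
  unfolding sdelta_def by (simp add: algebra_simps)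

lemma sdelta_lim:
  fixes f :: "real^'k::finite \<Rightarrow> real"
  assumes U: "open U" "x \<in> U" and fd: "\<And>y. y \<in> U \<Longrightarrow> f differentiable (at y)"
    and gd: "pd i f differentiable (at x)"
  shows "((\<lambda>h. sdelta f x i j h / h^2) \<longlongrightarrow> pd j (pd i f) x) (at 0)"
proof -
  let ?g = "pd i f"
  let ?ei = "axis i (1::real)" and ?ej = "axis j (1::real)"
  obtain g' where g: "(?g has_derivative g') (at x)" using gd by (auto simp: differentiable_def)
  have lin: "linear g'" using has_derivative_linear[OF g] .
  have c: "pd j ?g x = g' ?ej" using pd_hasderiv[OF g] .
  obtain r where r: "r > 0" "ball x r \<subseteq> U" using U open_contains_ball by blast
  show ?thesis unfolding LIM_eq
  proof (intro allI impI)
    fix \<epsilon> :: real assume "\<epsilon> > 0"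
    then have e4: "\<epsilon>/4 > 0" by simp
    then obtain \<delta> where \<delta>: "\<delta> > 0" "\<And>y. norm (y - x) < \<delta> \<Longrightarrow>
        norm (?g y - ?g x - g' (y - x)) \<le> \<epsilon>/4 * norm (y - x)"
      using g unfolding has_derivative_at_alt by blast
    define d where "d = min \<delta> r / 2"
    have d: "d > 0" "2*d \<le> \<delta>" "2*d \<le> r" using \<delta> r by (auto simp: d_def)
    have Rb: "\<bar>?g (x + v) - ?g x - g' v\<bar> \<le> \<epsilon>/4 * norm v" if "norm v < \<delta>" for v
      using \<delta>(2)[of "x + v"] that by simp
    show "\<exists>s>0. \<forall>h. h \<noteq> 0 \<and> norm (h - 0) < s \<longrightarrow> norm (sdelta f x i j h / h^2 - pd j ?g x) < \<epsilon>"
    proof (intro exI[of _ d] conjI allI impI)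
      show "d > 0" using d by simp
      fix h :: real assume h: "h \<noteq> 0 \<and> norm (h - 0) < d"
      then have hd: "\<bar>h\<bar> < d" and h0: "h \<noteq> 0" by auto
      define \<phi> where "\<phi> s = f (x + h *\<^sub>R ?ej + s *\<^sub>R ?ei) - f (x + s *\<^sub>R ?ei)" for s
      have inU: "x + h' *\<^sub>R ?ej + s *\<^sub>R ?ei \<in> U" if "\<bar>s\<bar> \<le> \<bar>h\<bar>" "\<bar>h'\<bar> \<le> \<bar>h\<bar>" for s h'
      proof -
        have "norm (h' *\<^sub>R ?ej + s *\<^sub>R ?ei) \<le> \<bar>h'\<bar> + \<bar>s\<bar>"
          using norm_triangle_ineq[of "h' *\<^sub>R ?ej" "s *\<^sub>R ?ei"] by simp
        also have "\<dots> < r" using that hd d by linarith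
        moreover have "dist x (x + (h' *\<^sub>R ?ej + s *\<^sub>R ?ei)) = norm (h' *\<^sub>R ?ej + s *\<^sub>R ?ei)"
          by (metis dist_commute dist_norm add_diff_cancel_left')
        ultimately have "x + (h' *\<^sub>R ?ej + s *\<^sub>R ?ei) \<in> ball x r" by simp
        then show ?thesis using r(2) by (auto simp: add.assoc)
      qed
      have \<phi>d: "(\<phi> has_real_derivative (?g (x + h *\<^sub>R ?ej + s *\<^sub>R ?ei) - ?g (x + s *\<^sub>R ?ei))) (at s)"
        if "\<bar>s\<bar> \<le> \<bar>h\<bar>" for s
      proof -
        have a1: "f differentiable (at (x + h *\<^sub>R ?ej + s *\<^sub>R ?ei))" using fd inU[OF that] by simp
        have a2: "f differentiable (at (x + s *\<^sub>R ?ei))" using fd inU[OF that, of 0] by simp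
        show ?thesis unfolding \<phi>_def
          by (intro derivative_intros line_deriv a1 a2[unfolded add.assoc])
      qed
      obtain \<xi> where \<xi>: "\<bar>\<xi>\<bar> < \<bar>h\<bar>" "\<phi> h - \<phi> 0 = h * (?g (x + h *\<^sub>R ?ej + \<xi> *\<^sub>R ?ei) - ?g (x + \<xi> *\<^sub>R ?ei))"
      proof (cases "h > 0")
        case True
        from MVT2[OF True, of \<phi> "\<lambda>s. ?g (x + h *\<^sub>R ?ej + s *\<^sub>R ?ei) - ?g (x + s *\<^sub>R ?ei)"] \<phi>d True
        obtain z where "0 < z" "z < h" "\<phi> h - \<phi> 0 = (h - 0) * (?g (x + h *\<^sub>R ?ej + z *\<^sub>R ?ei) - ?g (x + z *\<^sub>R ?ei))"
          by fastforce
        then show ?thesis using that[of z] by auto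
      next
        case False
        then have hn: "h < 0" using h0 by simp
        from MVT2[OF hn, of \<phi> "\<lambda>s. ?g (x + h *\<^sub>R ?ej + s *\<^sub>R ?ei) - ?g (x + s *\<^sub>R ?ei)"] \<phi>d hn
        obtain z where "h < z" "z < 0" "\<phi> 0 - \<phi> h = (0 - h) * (?g (x + h *\<^sub>R ?ej + z *\<^sub>R ?ei) - ?g (x + z *\<^sub>R ?ei))"
          by fastforce
        then show ?thesis using that[of z] by (auto simp: algebra_simps)
      qed
      have sd: "sdelta f x i j h = \<phi> h - \<phi> 0"
        unfolding sdelta_def \<phi>_def by (simp add: algebra_simps)
      define v1 where "v1 = h *\<^sub>R ?ej + \<xi> *\<^sub>R ?ei"
      define v2 where "v2 = \<xi> *\<^sub>R ?ei"
      have nv1: "norm v1 \<le> 2 * \<bar>h\<bar>"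
        using norm_triangle_ineq[of "h *\<^sub>R ?ej" "\<xi> *\<^sub>R ?ei"] \<xi>(1) by (simp add: v1_def)
      have nv2: "norm v2 \<le> \<bar>h\<bar>" using \<xi>(1) by (simp add: v2_def)
      have R1: "\<bar>?g (x + v1) - ?g x - g' v1\<bar> \<le> \<epsilon>/4 * (2 * \<bar>h\<bar>)"
        using Rb[of v1] nv1 hd d e4 by (smt (verit) mult_left_mono)
      have R2: "\<bar>?g (x + v2) - ?g x - g' v2\<bar> \<le> \<epsilon>/4 * \<bar>h\<bar>"
        using Rb[of v2] nv2 hd d e4 by (smt (verit) mult_left_mono)
      have lv: "g' v1 - g' v2 = h * g' ?ej"
        using lin by (simp add: v1_def v2_def linear_add linear_scale)
      have eq: "sdelta f x i j h / h^2 - pd j ?g x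
          = ((?g (x + v1) - ?g x - g' v1) - (?g (x + v2) - ?g x - g' v2)) / h"
        using h0 unfolding sd \<xi>(2) c
        by (simp add: v1_def v2_def power2_eq_square field_simps add.assoc lv[unfolded v1_def v2_def, symmetric])
      have "\<bar>(?g (x + v1) - ?g x - g' v1) - (?g (x + v2) - ?g x - g' v2)\<bar> \<le> 3 * (\<epsilon>/4) * \<bar>h\<bar>"
        using R1 R2 by linarith
      also have "\<dots> < \<epsilon> * \<bar>h\<bar>" using h0 \<open>\<epsilon> > 0\<close> by simp
      finally show "norm (sdelta f x i j h / h^2 - pd j ?g x) < \<epsilon>"
        unfolding eq using h0 by (simp add: pos_divide_less_eq abs_divide)
    qed
  qed
qed

lemma schwarz:
  fixes f :: "real^'k::finite \<Rightarrow> real"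
  assumes U: "open U" "x \<in> U" and fd: "\<And>y. y \<in> U \<Longrightarrow> f differentiable (at y)"
    and gi: "pd i f differentiable (at x)" and gj: "pd j f differentiable (at x)"
  shows "pd j (pd i f) x = pd i (pd j f) x"
proof -
  have a: "((\<lambda>h. sdelta f x i j h / h^2) \<longlongrightarrow> pd j (pd i f) x) (at 0)"
    by (rule sdelta_lim[OF U fd gi])
  have b: "((\<lambda>h. sdelta f x i j h / h^2) \<longlongrightarrow> pd i (pd j f) x) (at 0)"
    using sdelta_lim[OF U fd gj, of i] by (simp add: sdelta_sym)
  show ?thesis using LIM_unique[OF a b] .
qed

lemma matrix_inv_props:
  fixes M :: "real^'n::finite^'n"
  assumes "invertible M"
  shows "M ** matrix_inv M = mat 1" "matrix_inv M ** M = mat 1"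
proof -
  have "\<exists>A'. M ** A' = mat 1 \<and> A' ** M = mat 1" using assms by (simp add: invertible_def)
  from someI_ex[OF this] show "M ** matrix_inv M = mat 1" "matrix_inv M ** M = mat 1"
    by (simp_all add: matrix_inv_def)
qed

lemma matrix_inv_cramer:
  fixes M :: "real^'n::finite^'n"
  assumes "invertible M"
  shows "matrix_inv M $ a $ b =
     det (\<chi> i j. if j = a then (if i = b then 1 else 0) else M $ i $ j) / det M"
proof -
  have d0: "det M \<noteq> 0" using assms invertible_det_nz by blast
  define x where "x = (\<chi> k. matrix_inv M $ k $ b)"
  have "M *v x = (M ** matrix_inv M) *v axis b 1"
    by (simp add: x_def matrix_vector_mult_def matrix_matrix_mult_def axis_def vec_eq_iff
        if_distrib cong: if_cong) 
  also have "\<dots> = axis b 1" using matrix_inv_props(1)[OF assms] by simp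
  finally have "M *v x = axis b 1" .
  then have "x = (\<chi> k. det(\<chi> i j. if j=k then (axis b 1 :: real^'n)$i else M$i$j) / det M)"
    using cramer[OF d0] by blast
  then have "x $ a = det(\<chi> i j. if j=a then (axis b 1 :: real^'n)$i else M$i$j) / det M"
    by simp
  moreover have ax: "\<And>i. (axis b 1 :: real^'n) $ i = (if i = b then 1 else 0)"
    by (simp add: axis_def)
  ultimately show ?thesis by (simp only: x_def ax vec_lambda_beta)
qed

lemma differentiable_prod:
  fixes f :: "'i \<Rightarrow> 'a::real_normed_vector \<Rightarrow> real"
  assumes "\<And>i. i \<in> I \<Longrightarrow> f i differentiable (at x)"
  shows "(\<lambda>x. \<Prod>i\<in>I. f i x) differentiable (at x)"
proof -
  from assms obtain f' where "\<And>i. i \<in> I \<Longrightarrow> (f i has_derivative f' i) (at x)"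
    unfolding differentiable_def by metis
  then show ?thesis unfolding differentiable_def by (blast intro: has_derivative_prod)
qed

lemma differentiable_det:
  fixes F :: "'a::real_normed_vector \<Rightarrow> real^'n::finite^'n"
  assumes "\<And>i j. (\<lambda>y. F y $ i $ j) differentiable (at x)"
  shows "(\<lambda>y. det (F y)) differentiable (at x)"
  unfolding det_def
  by (intro differentiable_sum finite_permutations[OF finite_class.finite_UNIV] ballI differentiable_mult
      differentiable_const differentiable_prod assms)

lemma matrix_inv_differentiable:
  fixes F :: "real^'k::finite \<Rightarrow> real^'n::finite^'n"
  assumes U: "open U" "x \<in> U" and inv: "\<And>y. y \<in> U \<Longrightarrow> invertible (F y)"
    and d: "\<And>i j. (\<lambda>y. F y $ i $ j) differentiable (at x)"
  shows "(\<lambda>y. matrix_inv (F y) $ a $ b) differentiable (at x)"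
proof -
  let ?C = "\<lambda>y. det (\<chi> i j. if j = a then (if i = b then 1 else 0) else F y $ i $ j) / det (F y)"
  have "?C differentiable (at x)"
  proof (intro differentiable_divide differentiable_det)
    show "(\<lambda>y. (\<chi> i j. if j = a then (if i = b then 1 else 0) else F y $ i $ j) $ i $ j) differentiable (at x)" for i j
      using d by (cases "j = a") auto
    show "(\<lambda>y. F y $ i $ j) differentiable (at x)" for i j using d .
    show "det (F x) \<noteq> 0" using inv[OF U(2)] invertible_det_nz by blast
  qed
  then obtain C' where C: "(?C has_derivative C') (at x)" by (auto simp: differentiable_def)
  have "((\<lambda>y. matrix_inv (F y) $ a $ b) has_derivative C') (at x)"
    by (rule has_derivative_transform_within_open[OF C U]) (simp add: matrix_inv_cramer inv)
  then show ?thesis by (auto simp: differentiable_def)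
qed

definition join :: "real^'d::finite \<Rightarrow> real^'n::finite \<Rightarrow> real^('d + 'n)" where
  "join y x = (\<chi> M. case M of Inl i \<Rightarrow> y $ i | Inr j \<Rightarrow> x $ j)"

lemma ypart_join[simp]: "ypart (join y x) = y" by (simp add: ypart_def join_def vec_eq_iff)
lemma xpart_join[simp]: "xpart (join y x) = x" by (simp add: xpart_def join_def vec_eq_iff)
lemma join_parts[simp]: "join (ypart z) (xpart z) = z"
  by (simp add: ypart_def xpart_def join_def vec_eq_iff split: sum.split)

lemma join_Inl[simp]: "join y x $ Inl i = y $ i" by (simp add: join_def)
lemma join_Inr[simp]: "join y x $ Inr i = x $ i" by (simp add: join_def)
lemma ypart_nth[simp]: "ypart z $ i = z $ Inl i" by (simp add: ypart_def)
lemma xpart_nth[simp]: "xpart z $ i = z $ Inr i" by (simp add: xpart_def)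

lemma line_Inr: "z + t *\<^sub>R axis (Inr m) 1 = join (ypart z) (xpart z + t *\<^sub>R axis m 1)"
  unfolding vec_eq_iff
proof
  fix i show "(z + t *\<^sub>R axis (Inr m) 1) $ i = join (ypart z) (xpart z + t *\<^sub>R axis m 1) $ i"
    by (cases i) (auto simp: axis_def)
qed
lemma line_Inl: "z + t *\<^sub>R axis (Inl m) 1 = join (ypart z + t *\<^sub>R axis m 1) (xpart z)"
  unfolding vec_eq_iff
proof
  fix i show "(z + t *\<^sub>R axis (Inl m) 1) $ i = join (ypart z + t *\<^sub>R axis m 1) (xpart z) $ i"
    by (cases i) (auto simp: axis_def)
qed

lemma pd_Inr: "pd (Inr m) F z = pd m (\<lambda>x. F (join (ypart z) x)) (xpart z)"
  by (simp add: pd_def line_Inr)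
lemma pd_Inl: "pd (Inl m) F z = pd m (\<lambda>y. F (join y (xpart z))) (ypart z)"
  by (simp add: pd_def line_Inl)

lemma sum_split: "(\<Sum>a\<in>(UNIV::('a::finite + 'b::finite) set). f a) = (\<Sum>i\<in>UNIV. f (Inl i)) + (\<Sum>j\<in>UNIV. f (Inr j))"
proof -
  have "(UNIV::('a + 'b) set) = UNIV <+> UNIV" by auto
  then show ?thesis using sum.Plus[of "UNIV::'a set" "UNIV::'b set" f] by (simp add: o_def)
qed

lemma linear_ypart: "linear (ypart :: real^('d::finite + 'n::finite) \<Rightarrow> real^'d)"
  by (rule linearI) (simp_all add: vec_eq_iff)
lemma linear_xpart: "linear (xpart :: real^('d::finite + 'n::finite) \<Rightarrow> real^'n)"
  by (rule linearI) (simp_all add: vec_eq_iff)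

lemma open_prod_dom:
  assumes "open U" "open V"
  shows "open (prod_dom U V :: (real^('d::finite + 'n::finite)) set)"
proof -
  have cy: "continuous_on UNIV (ypart :: real^('d + 'n) \<Rightarrow> real^'d)"
    using linear_continuous_on[OF linear_conv_bounded_linear[THEN iffD1, OF linear_ypart]] .
  have cx: "continuous_on UNIV (xpart :: real^('d + 'n) \<Rightarrow> real^'n)"
    using linear_continuous_on[OF linear_conv_bounded_linear[THEN iffD1, OF linear_xpart]] .
  have "prod_dom U V = (ypart -` U) \<inter> (xpart -` V)" by (auto simp: prod_dom_def)
  moreover have "open (ypart -` U :: (real^('d + 'n)) set)"
    using open_vimage[OF assms(1) cy] .
  moreover have "open (xpart -` V :: (real^('d + 'n)) set)"
    using open_vimage[OF assms(2) cx] .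
  ultimately show ?thesis by auto
qed

lemma join_in_prod_dom[simp]: "join y x \<in> prod_dom U V \<longleftrightarrow> y \<in> U \<and> x \<in> V"
  by (simp add: prod_dom_def)

definition blk :: "real^'d::finite^'d \<Rightarrow> real^'n::finite^'n \<Rightarrow> ('d + 'n) \<Rightarrow> ('d + 'n) \<Rightarrow> real" where
  "blk P Q M N = (case (M, N) of (Inl i, Inl j) \<Rightarrow> P $ i $ j | (Inr i, Inr j) \<Rightarrow> Q $ i $ j | _ \<Rightarrow> 0)"

lemma blk_simps[simp]:
  "blk P Q (Inl i) (Inl j) = P $ i $ j" "blk P Q (Inr k) (Inr l) = Q $ k $ l"
  "blk P Q (Inl i) (Inr l) = 0" "blk P Q (Inr k) (Inl j) = 0"
  by (simp_all add: blk_def)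

lemma warped_eq: "warped_metric gd gb A z $ M $ N = exp (2 * A (xpart z)) * blk (gd (ypart z)) (gb (xpart z)) M N"
  by (simp add: warped_metric_def blk_def split: sum.split)

lemma matrix_inv_unique:
  fixes M :: "real^'n::finite^'n"
  assumes "M ** B = mat 1" "B ** M = mat 1"
  shows "matrix_inv M = B"
proof -
  have inv: "invertible M" using assms by (auto simp: invertible_def)
  have "B = B ** (M ** matrix_inv M)" using matrix_inv_props(1)[OF inv] by simp
  also have "\<dots> = (B ** M) ** matrix_inv M" by (simp add: matrix_mul_assoc)
  finally show ?thesis using assms(2) by simp
qed

lemma blk_mult:
  "(\<Sum>K\<in>UNIV. blk P Q M K * blk P' Q' K N) = blk (P ** P') (Q ** Q') M N"
  by (cases M; cases N) (simp_all add: sum_split matrix_matrix_mult_def)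

lemma blk_mat1: "blk (mat 1) (mat 1) M N = (if M = N then 1 else 0)"
  by (cases M; cases N) (simp_all add: mat_def)

lemma warped_inv:
  assumes "invertible (gd (ypart z))" "invertible (gb (xpart z))"
  shows "matrix_inv (warped_metric gd gb A z) $ M $ N =
     exp (- 2 * A (xpart z)) * blk (matrix_inv (gd (ypart z))) (matrix_inv (gb (xpart z))) M N"
proof -
  let ?e = "exp (2 * A (xpart z))" and ?e' = "exp (- 2 * A (xpart z))"
  let ?B = "\<chi> M N. ?e' * blk (matrix_inv (gd (ypart z))) (matrix_inv (gb (xpart z))) M N"
  have ee: "?e * ?e' = 1" "exp (2 * A (xpart z)) * exp (- (2 * A (xpart z))) = 1"
    by (simp_all add: exp_minus[symmetric] exp_add[symmetric])
  let ?P = "gd (ypart z)" and ?Q = "gb (xpart z)"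
  have m1: "?P ** matrix_inv ?P = mat 1" "matrix_inv ?P ** ?P = mat 1"
    "?Q ** matrix_inv ?Q = mat 1" "matrix_inv ?Q ** ?Q = mat 1"
    using matrix_inv_props assms by blast+
  have "(warped_metric gd gb A z ** ?B) $ M $ N = mat 1 $ M $ N" for M N
  proof -
    have "(warped_metric gd gb A z ** ?B) $ M $ N
        = (\<Sum>K\<in>UNIV. (?e * ?e') * (blk ?P ?Q M K * blk (matrix_inv ?P) (matrix_inv ?Q) K N))"
      unfolding matrix_matrix_mult_def by (simp add: warped_eq mult_ac)
    also have "\<dots> = blk (mat 1) (mat 1) M N"
      by (simp add: ee blk_mult m1)
    also have "\<dots> = (if M = N then 1 else 0)" by (rule blk_mat1)
    also have "\<dots> = mat 1 $ M $ N" by (simp add: mat_def)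
    finally show ?thesis .
  qed
  then have "warped_metric gd gb A z ** ?B = mat 1" by (simp add: vec_eq_iff)
  moreover have "(?B ** warped_metric gd gb A z) $ M $ N = mat 1 $ M $ N" for M N
  proof -
    have "(?B ** warped_metric gd gb A z) $ M $ N
        = (\<Sum>K\<in>UNIV. (?e * ?e') * (blk (matrix_inv ?P) (matrix_inv ?Q) M K * blk ?P ?Q K N))"
      unfolding matrix_matrix_mult_def by (simp add: warped_eq mult_ac)
    also have "\<dots> = blk (mat 1) (mat 1) M N"
      by (simp add: ee blk_mult m1)
    also have "\<dots> = (if M = N then 1 else 0)" by (rule blk_mat1)
    also have "\<dots> = mat 1 $ M $ N" by (simp add: mat_def)
    finally show ?thesis .
  qed
  then have "?B ** warped_metric gd gb A z = mat 1" by (simp add: vec_eq_iff)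
  ultimately have "matrix_inv (warped_metric gd gb A z) = ?B" by (rule matrix_inv_unique)
  then show ?thesis by simp
qed

definition aZ :: "(real^'n::finite \<Rightarrow> real) \<Rightarrow> real^'n \<Rightarrow> ('d::finite + 'n) \<Rightarrow> real" where
  "aZ A x B = (case B of Inl _ \<Rightarrow> 0 | Inr k \<Rightarrow> pd k A x)"

definition dP :: "(real^'d::finite \<Rightarrow> real^'d^'d) \<Rightarrow> (real^'n::finite \<Rightarrow> real^'n^'n)
    \<Rightarrow> real^'d \<Rightarrow> real^'n \<Rightarrow> ('d + 'n) \<Rightarrow> ('d + 'n) \<Rightarrow> ('d + 'n) \<Rightarrow> real" where
  "dP gd gb y x B E C = (case B of
      Inl r \<Rightarrow> blk (\<chi> i j. pd r (\<lambda>y. gd y $ i $ j) y) 0 E C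
    | Inr k \<Rightarrow> blk 0 (\<chi> i j. pd k (\<lambda>x. gb x $ i $ j) x) E C)"

lemma aZ_simps[simp]: "aZ A x (Inl i) = 0" "aZ A x (Inr k) = pd k A x"
  by (simp_all add: aZ_def)

lemma pd_exp2A:
  fixes A :: "real^'n::finite \<Rightarrow> real"
  assumes "A differentiable (at x)"
  shows "pd k (\<lambda>x. exp (2 * A x)) x = exp (2 * A x) * (2 * pd k A x)"
proof -
  obtain A' where A: "(A has_derivative A') (at x)" using assms by (auto simp: differentiable_def)
  have "((\<lambda>x. exp (2 * A x)) has_derivative (\<lambda>v. exp (2 * A x) * (2 * A' v))) (at x)"
    using A by (auto intro!: derivative_eq_intros simp: algebra_simps)
  from pd_hasderiv[OF this] pd_hasderiv[OF A] show ?thesis by simp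
qed

lemma diff_exp2A:
  fixes A :: "real^'n::finite \<Rightarrow> real"
  assumes "A differentiable (at x)"
  shows "(\<lambda>x. exp (2 * A x)) differentiable (at x)"
proof -
  obtain A' where A: "(A has_derivative A') (at x)" using assms by (auto simp: differentiable_def)
  have "((\<lambda>x. exp (2 * A x)) has_derivative (\<lambda>v. exp (2 * A x) * (2 * A' v))) (at x)"
    using A by (auto intro!: derivative_eq_intros simp: algebra_simps)
  then show ?thesis by (auto simp: differentiable_def)
qed

lemma pdW:
  fixes gd :: "real^'d::finite \<Rightarrow> real^'d^'d" and gb :: "real^'n::finite \<Rightarrow> real^'n^'n"
  assumes dgd: "\<And>i j. (\<lambda>y. gd y $ i $ j) differentiable (at (ypart z))"
    and dgb: "\<And>i j. (\<lambda>x. gb x $ i $ j) differentiable (at (xpart z))"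
    and dA: "A differentiable (at (xpart z))"
  shows "pd B (\<lambda>z. warped_metric gd gb A z $ E $ C) z =
     exp (2 * A (xpart z)) * (2 * aZ A (xpart z) B * blk (gd (ypart z)) (gb (xpart z)) E C
        + dP gd gb (ypart z) (xpart z) B E C)"
proof (cases B)
  case (Inl r)
  have "pd B (\<lambda>z. warped_metric gd gb A z $ E $ C) z =
        pd r (\<lambda>y. exp (2 * A (xpart z)) * blk (gd y) (gb (xpart z)) E C) (ypart z)"
    by (simp add: Inl pd_Inl warped_eq)
  also have "\<dots> = exp (2 * A (xpart z)) * dP gd gb (ypart z) (xpart z) B E C"
  proof (cases E; cases C)
    fix i j assume "E = Inl i" "C = Inl j"
    then show ?thesis using Inl by (simp add: dP_def pd_cmult dgd)
  qed (simp_all add: Inl dP_def)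
  finally show ?thesis using Inl by simp
next
  case (Inr k)
  have "pd B (\<lambda>z. warped_metric gd gb A z $ E $ C) z =
        pd k (\<lambda>x. exp (2 * A x) * blk (gd (ypart z)) (gb x) E C) (xpart z)"
    by (simp add: Inr pd_Inr warped_eq)
  also have "\<dots> = exp (2 * A (xpart z)) * (2 * aZ A (xpart z) B * blk (gd (ypart z)) (gb (xpart z)) E C
        + dP gd gb (ypart z) (xpart z) B E C)"
  proof (cases E; cases C)
    fix i j assume "E = Inl i" "C = Inl j"
    moreover have "(\<lambda>x. exp (2 * A x)) differentiable (at (xpart z))"
      using dA by (rule diff_exp2A)
    ultimately show ?thesis using Inr dA
      by (simp add: dP_def pd_multc pd_exp2A)
  next
    fix i j assume "E = Inr i" "C = Inr j"
    moreover have "(\<lambda>x. exp (2 * A x)) differentiable (at (xpart z))"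
      using dA by (rule diff_exp2A)
    ultimately show ?thesis using Inr dA
      by (simp add: dP_def pd_mult dgb pd_exp2A) (simp add: algebra_simps)
  qed (simp_all add: Inr dP_def)
  finally show ?thesis .
qed

lemma christoffel_W_gen:
  fixes gd :: "real^'d::finite \<Rightarrow> real^'d^'d" and gb :: "real^'n::finite \<Rightarrow> real^'n^'n"
  assumes dgd: "\<And>i j. (\<lambda>y. gd y $ i $ j) differentiable (at (ypart z))"
    and dgb: "\<And>i j. (\<lambda>x. gb x $ i $ j) differentiable (at (xpart z))"
    and dA: "A differentiable (at (xpart z))"
    and id: "invertible (gd (ypart z))" and ib: "invertible (gb (xpart z))"
  shows "christoffel (warped_metric gd gb A) a b c z =
    (\<Sum>E\<in>UNIV. blk (matrix_inv (gd (ypart z))) (matrix_inv (gb (xpart z))) a E *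
       ((2 * aZ A (xpart z) b * blk (gd (ypart z)) (gb (xpart z)) E c + dP gd gb (ypart z) (xpart z) b E c)
      + (2 * aZ A (xpart z) c * blk (gd (ypart z)) (gb (xpart z)) E b + dP gd gb (ypart z) (xpart z) c E b)
      - (2 * aZ A (xpart z) E * blk (gd (ypart z)) (gb (xpart z)) b c + dP gd gb (ypart z) (xpart z) E b c))) / 2"
proof -
  have ee: "exp (- 2 * A (xpart z)) * exp (2 * A (xpart z)) = 1"
    by (simp add: exp_add[symmetric])
  have t: "(exp (- 2 * A (xpart z)) * p) * (exp (2 * A (xpart z)) * u + exp (2 * A (xpart z)) * v
      - exp (2 * A (xpart z)) * w) = p * (u + v - w)" for p u v w :: real
  proof -
    have "(exp (- 2 * A (xpart z)) * p) * (exp (2 * A (xpart z)) * u + exp (2 * A (xpart z)) * v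
      - exp (2 * A (xpart z)) * w) = (exp (- 2 * A (xpart z)) * exp (2 * A (xpart z))) * (p * (u + v - w))"
      by (simp only: algebra_simps)
    then show ?thesis by (simp only: ee mult_1)
  qed
  show ?thesis
    unfolding christoffel_def warped_inv[where gd=gd and gb=gb and z=z and A=A, OF id ib]
      pdW[OF dgd dgb dA] t ..
qed


definition hv :: "(real^'n::finite \<Rightarrow> real^'n^'n) \<Rightarrow> (real^'n \<Rightarrow> real) \<Rightarrow> 'n \<Rightarrow> real^'n \<Rightarrow> real" where
  "hv gb A m x = (\<Sum>e\<in>UNIV. matrix_inv (gb x) $ m $ e * pd e A x)"

definition Gt :: "(real^'d::finite \<Rightarrow> real^'d^'d) \<Rightarrow> (real^'n::finite \<Rightarrow> real^'n^'n) \<Rightarrow> (real^'n \<Rightarrow> real)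
   \<Rightarrow> ('d + 'n) \<Rightarrow> ('d + 'n) \<Rightarrow> ('d + 'n) \<Rightarrow> real^'d \<Rightarrow> real^'n \<Rightarrow> real" where
  "Gt gd gb A a b c y x = (case a of
     Inl \<alpha> \<Rightarrow> (case b of
         Inl \<beta> \<Rightarrow> (case c of Inl \<gamma> \<Rightarrow> christoffel gd \<alpha> \<beta> \<gamma> y | Inr k \<Rightarrow> (if \<alpha> = \<beta> then pd k A x else 0))
       | Inr k \<Rightarrow> (case c of Inl \<gamma> \<Rightarrow> (if \<alpha> = \<gamma> then pd k A x else 0) | Inr _ \<Rightarrow> 0))
   | Inr m \<Rightarrow> (case b of
         Inl \<beta> \<Rightarrow> (case c of Inl \<gamma> \<Rightarrow> - hv gb A m x * gd y $ \<beta> $ \<gamma> | Inr _ \<Rightarrow> 0)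
       | Inr n \<Rightarrow> (case c of Inl _ \<Rightarrow> 0
            | Inr k \<Rightarrow> christoffel gb m n k x + (if m = k then pd n A x else 0)
                 + (if m = n then pd k A x else 0) - hv gb A m x * gb x $ n $ k)))"

lemma Gt_simps[simp]:
  "Gt gd gb A (Inl \<alpha>) (Inl \<beta>) (Inl \<gamma>) y x = christoffel gd \<alpha> \<beta> \<gamma> y"
  "Gt gd gb A (Inl \<alpha>) (Inl \<beta>) (Inr k) y x = (if \<alpha> = \<beta> then pd k A x else 0)"
  "Gt gd gb A (Inl \<alpha>) (Inr k) (Inl \<gamma>) y x = (if \<alpha> = \<gamma> then pd k A x else 0)"
  "Gt gd gb A (Inl \<alpha>) (Inr k) (Inr k') y x = 0"
  "Gt gd gb A (Inr m) (Inl \<beta>) (Inl \<gamma>) y x = - hv gb A m x * gd y $ \<beta> $ \<gamma>"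
  "Gt gd gb A (Inr m) (Inl \<beta>) (Inr k) y x = 0"
  "Gt gd gb A (Inr m) (Inr n) (Inl \<gamma>) y x = 0"
  "Gt gd gb A (Inr m) (Inr n) (Inr k) y x = christoffel gb m n k x + (if m = k then pd n A x else 0)
                 + (if m = n then pd k A x else 0) - hv gb A m x * gb x $ n $ k"
  by (simp_all add: Gt_def)

lemma inv_mult_left:
  fixes M :: "real^'n::finite^'n"
  assumes "invertible M"
  shows "(\<Sum>k\<in>UNIV. matrix_inv M $ i $ k * M $ k $ j) = (if i = j then 1 else 0)"
proof -
  have "(matrix_inv M ** M) $ i $ j = mat 1 $ i $ j" using matrix_inv_props(2)[OF assms] by simp
  then show ?thesis by (simp add: matrix_matrix_mult_def mat_def)
qed

lemma inv_mult_right: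
  fixes M :: "real^'n::finite^'n"
  assumes "invertible M"
  shows "(\<Sum>k\<in>UNIV. M $ i $ k * matrix_inv M $ k $ j) = (if i = j then 1 else 0)"
proof -
  have "(M ** matrix_inv M) $ i $ j = mat 1 $ i $ j" using matrix_inv_props(1)[OF assms] by simp
  then show ?thesis by (simp add: matrix_matrix_mult_def mat_def)
qed

lemma sum_alg:
  fixes p g1 g2 c d1 d2 d3 :: "'e \<Rightarrow> real"
  assumes "finite S"
  shows "(\<Sum>e\<in>S. p e * ((2*a*g1 e + d1 e) + (2*b*g2 e + d2 e) - (2*c e*g3 + d3 e)))/2
    = (\<Sum>e\<in>S. p e * (d1 e + d2 e - d3 e))/2 + a * (\<Sum>e\<in>S. p e * g1 e) + b * (\<Sum>e\<in>S. p e*g2 e)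
      - (\<Sum>e\<in>S. p e * c e) * g3"
proof -
  have "(\<Sum>e\<in>S. p e * ((2*a*g1 e + d1 e) + (2*b*g2 e + d2 e) - (2*c e*g3 + d3 e)))
     = (\<Sum>e\<in>S. p e * (d1 e + d2 e - d3 e) + 2 * (a * (p e * g1 e)) + 2 * (b * (p e * g2 e))
        - 2 * ((p e * c e) * g3))"
    by (rule sum.cong) (simp_all add: algebra_simps)
  also have "\<dots> = (\<Sum>e\<in>S. p e * (d1 e + d2 e - d3 e)) + 2 * (a * (\<Sum>e\<in>S. p e * g1 e))
      + 2 * (b * (\<Sum>e\<in>S. p e*g2 e)) - 2 * ((\<Sum>e\<in>S. p e * c e) * g3)"
    by (simp add: sum.distrib sum_subtractf sum_distrib_left sum_distrib_right)
  finally show ?thesis by simp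
qed

lemma christoffel_W:
  fixes gd :: "real^'d::finite \<Rightarrow> real^'d^'d" and gb :: "real^'n::finite \<Rightarrow> real^'n^'n"
  assumes dgd: "\<And>i j. (\<lambda>y. gd y $ i $ j) differentiable (at (ypart z))"
    and dgb: "\<And>i j. (\<lambda>x. gb x $ i $ j) differentiable (at (xpart z))"
    and dA: "A differentiable (at (xpart z))"
    and id: "invertible (gd (ypart z))" and ib: "invertible (gb (xpart z))"
  shows "christoffel (warped_metric gd gb A) a b c z = Gt gd gb A a b c (ypart z) (xpart z)"
proof -
  note G = christoffel_W_gen[OF dgd dgb dA id ib]
  let ?y = "ypart z" and ?x = "xpart z"
  have L: "(\<Sum>k\<in>UNIV. matrix_inv (gd ?y) $ i $ k * gd ?y $ k $ j) = (if i = j then 1 else 0)" for i j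
    using inv_mult_left[OF id] .
  have R: "(\<Sum>k\<in>UNIV. matrix_inv (gb ?x) $ i $ k * gb ?x $ k $ j) = (if i = j then 1 else 0)" for i j
    using inv_mult_left[OF ib] .
  have Lc: "(\<Sum>k\<in>UNIV. matrix_inv (gd ?y) $ i $ k * (gd ?y $ k $ j * c)) = (if i = j then c else 0)" for i j c
    using L[of i j] by (simp add: mult.assoc[symmetric] sum_distrib_right[symmetric])
  have Lc2: "(\<Sum>k\<in>UNIV. matrix_inv (gd ?y) $ i $ k * (c * gd ?y $ k $ j)) = (if i = j then c else 0)" for i j c
    using Lc[of i j c] by (simp add: mult.commute)
  show ?thesis
  proof (cases a; cases b; cases c)
    fix \<alpha> \<beta> \<gamma> assume "a = Inl \<alpha>" "b = Inl \<beta>" "c = Inl \<gamma>"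
    then show ?thesis unfolding G by (simp add: sum_split dP_def christoffel_def)
  next
    fix \<alpha> \<beta> k assume "a = Inl \<alpha>" "b = Inl \<beta>" "c = Inr k"
    then show ?thesis unfolding G
      by (simp add: sum_split dP_def Lc2)
  next
    fix \<alpha> \<gamma> k assume "a = Inl \<alpha>" "b = Inr k" "c = Inl \<gamma>"
    then show ?thesis unfolding G
      by (simp add: sum_split dP_def Lc2)
  next
    fix \<alpha> n k assume "a = Inl \<alpha>" "b = Inr n" "c = Inr k"
    then show ?thesis unfolding G by (simp add: sum_split dP_def)
  next
    fix m \<beta> \<gamma> assume "a = Inr m" "b = Inl \<beta>" "c = Inl \<gamma>"
    then show ?thesis unfolding G
      by (simp add: sum_split dP_def hv_def) (simp add: sum_negf sum_distrib_left sum_distrib_right mult_ac)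
  next
    fix m \<beta> k assume "a = Inr m" "b = Inl \<beta>" "c = Inr k"
    then show ?thesis unfolding G by (simp add: sum_split dP_def)
  next
    fix m n \<gamma> assume "a = Inr m" "b = Inr n" "c = Inl \<gamma>"
    then show ?thesis unfolding G by (simp add: sum_split dP_def)
  next
    fix m n k assume abc: "a = Inr m" "b = Inr n" "c = Inr k"
    have "christoffel (warped_metric gd gb A) a b c z =
      (\<Sum>e\<in>UNIV. matrix_inv (gb ?x) $ m $ e *
       ((2 * pd n A ?x * gb ?x $ e $ k + pd n (\<lambda>x. gb x $ e $ k) ?x)
      + (2 * pd k A ?x * gb ?x $ e $ n + pd k (\<lambda>x. gb x $ e $ n) ?x)
      - (2 * pd e A ?x * gb ?x $ n $ k + pd e (\<lambda>x. gb x $ n $ k) ?x))) / 2"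
      unfolding G abc by (simp add: sum_split dP_def)
    also have "\<dots> = christoffel gb m n k ?x + pd n A ?x * (if m = k then 1 else 0)
       + pd k A ?x * (if m = n then 1 else 0) - hv gb A m ?x * gb ?x $ n $ k"
      by (subst sum_alg) (simp_all add: R christoffel_def hv_def)
    finally show ?thesis using abc by simp
  qed
qed

lemma posdef_invertible:
  fixes G :: "real^'n::finite^'n"
  assumes "pos_def_mat G"
  shows "invertible G"
proof -
  have "\<forall>x. G *v x = 0 \<longrightarrow> x = 0"
    using assms unfolding pos_def_mat_def by (metis inner_zero_right less_irrefl)
  then have "\<exists>B. B ** G = mat 1" using matrix_left_invertible_ker by blast
  then show ?thesis using invertible_left_inverse by blast
qed

lemma sylvester_invertible:
  fixes G P :: "real^'n::finite^'n"
  assumes "invertible P"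
    and "transpose P ** G ** P = (\<chi> a b. if a = b then (if a = i0 then -1 else 1) else 0)"
  shows "invertible G"
proof -
  let ?D = "(\<chi> a b. if a = b then (if a = i0 then -1 else 1) else 0) :: real^'n^'n"
  have "det ?D = (\<Prod>i\<in>UNIV. ?D $ i $ i)" by (rule det_diagonal) simp
  also have "\<dots> \<noteq> 0" by (simp add: prod_zero_iff)
  finally have "det ?D \<noteq> 0" .
  then have "det (transpose P ** G ** P) \<noteq> 0" using assms(2) by simp
  then have "det G \<noteq> 0" by (metis det_mul mult_zero_left mult_zero_right)
  then show ?thesis using invertible_det_nz by blast
qed

locale wsetting =
  fixes gd :: "real^'d::finite \<Rightarrow> real^'d^'d"
    and gb :: "real^'n::finite \<Rightarrow> real^'n^'n"
    and A :: "real^'n \<Rightarrow> real"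
    and Xd :: "(real^'d) set" and Mn :: "(real^'n) set"
  assumes oX: "open Xd" and oM: "open Mn"
    and gd_sm: "smooth_metric_on Xd gd"
    and gd_inv: "\<And>y. y \<in> Xd \<Longrightarrow> invertible (gd y)"
    and gb_sm: "smooth_metric_on Mn gb"
    and gb_inv: "\<And>x. x \<in> Mn \<Longrightarrow> invertible (gb x)"
    and gb_sym: "\<And>x i j. x \<in> Mn \<Longrightarrow> gb x $ i $ j = gb x $ j $ i"
    and A_sm: "coord_smooth_on Mn A"
begin

abbreviation "W \<equiv> warped_metric gd gb A"

lemma dgd: "y \<in> Xd \<Longrightarrow> (\<lambda>y. gd y $ i $ j) differentiable (at y)"
  using gd_sm unfolding smooth_metric_on_def coord_smooth_on_def by (metis pds.simps(1))
lemma dgb: "x \<in> Mn \<Longrightarrow> (\<lambda>x. gb x $ i $ j) differentiable (at x)"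
  using gb_sm unfolding smooth_metric_on_def coord_smooth_on_def by (metis pds.simps(1))
lemma ddgb: "x \<in> Mn \<Longrightarrow> pd k (\<lambda>x. gb x $ i $ j) differentiable (at x)"
  using gb_sm unfolding smooth_metric_on_def coord_smooth_on_def by (metis pds.simps)
lemma dA: "x \<in> Mn \<Longrightarrow> A differentiable (at x)"
  using A_sm unfolding coord_smooth_on_def by (metis pds.simps(1))
lemma ddA: "x \<in> Mn \<Longrightarrow> pd k A differentiable (at x)"
  using A_sm unfolding coord_smooth_on_def by (metis pds.simps)
lemma dddA: "x \<in> Mn \<Longrightarrow> pd l (pd k A) differentiable (at x)"
  using A_sm unfolding coord_smooth_on_def by (metis pds.simps)

lemma dinv: "x \<in> Mn \<Longrightarrow> (\<lambda>x. matrix_inv (gb x) $ i $ j) differentiable (at x)"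
  by (rule matrix_inv_differentiable[OF oM _ gb_inv dgb])

lemma dGb: "x \<in> Mn \<Longrightarrow> christoffel gb m n k differentiable (at x)"
  unfolding christoffel_def[abs_def]
  by (intro differentiable_divide differentiable_sum ballI differentiable_mult differentiable_add
      differentiable_diff dinv ddgb differentiable_const finite) auto

lemma dhv: "x \<in> Mn \<Longrightarrow> hv gb A m differentiable (at x)"
  unfolding hv_def[abs_def]
  by (intro differentiable_sum ballI differentiable_mult dinv ddA finite)

lemma schwarzA: "x \<in> Mn \<Longrightarrow> pd j (pd i A) x = pd i (pd j A) x"
  by (rule schwarz[OF oM _ dA ddA ddA])

lemma Gam: "z \<in> prod_dom Xd Mn \<Longrightarrow> christoffel W a b c z = Gt gd gb A a b c (ypart z) (xpart z)"
  by (rule christoffel_W) (auto simp: prod_dom_def dgd dgb dA gd_inv gb_inv)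

lemma pdGam: "z \<in> prod_dom Xd Mn \<Longrightarrow>
   pd B (christoffel W a b c) z = pd B (\<lambda>z. Gt gd gb A a b c (ypart z) (xpart z)) z"
  by (rule pd_cong_open[OF open_prod_dom[OF oX oM]]) (auto simp: Gam)

lemma pdGam_Inl: "z \<in> prod_dom Xd Mn \<Longrightarrow>
   pd (Inl r) (christoffel W a b c) z = pd r (\<lambda>y. Gt gd gb A a b c y (xpart z)) (ypart z)"
proof -
  assume z: "z \<in> prod_dom Xd Mn"
  have "pd (Inl r) (christoffel W a b c) z = pd (Inl r) (\<lambda>z. Gt gd gb A a b c (ypart z) (xpart z)) z"
    by (rule pdGam[OF z])
  also have "\<dots> = pd r (\<lambda>y. Gt gd gb A a b c (ypart (join y (xpart z))) (xpart (join y (xpart z)))) (ypart z)"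
    by (rule pd_Inl)
  finally show ?thesis by simp
qed

lemma pdGam_Inr: "z \<in> prod_dom Xd Mn \<Longrightarrow>
   pd (Inr k) (christoffel W a b c) z = pd k (\<lambda>x. Gt gd gb A a b c (ypart z) x) (xpart z)"
proof -
  assume z: "z \<in> prod_dom Xd Mn"
  have "pd (Inr k) (christoffel W a b c) z = pd (Inr k) (\<lambda>z. Gt gd gb A a b c (ypart z) (xpart z)) z"
    by (rule pdGam[OF z])
  also have "\<dots> = pd k (\<lambda>x. Gt gd gb A a b c (ypart (join (ypart z) x)) (xpart (join (ypart z) x))) (xpart z)"
    by (rule pd_Inr)
  finally show ?thesis by simp
qed

lemma hv_g: "x \<in> Mn \<Longrightarrow> (\<Sum>m\<in>UNIV. hv gb A m x * gb x $ m $ k) = pd k A x"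
proof -
  assume x: "x \<in> Mn"
  have "(\<Sum>m\<in>UNIV. hv gb A m x * gb x $ m $ k) =
      (\<Sum>e\<in>UNIV. pd e A x * (\<Sum>m\<in>UNIV. gb x $ k $ m * matrix_inv (gb x) $ m $ e))"
    unfolding hv_def sum_distrib_right sum_distrib_left
    by (subst sum.swap) (simp add: gb_sym[OF x] mult_ac)
  also have "\<dots> = pd k A x" by (simp add: inv_mult_right[OF gb_inv[OF x]] if_distrib cong: if_cong)
  finally show ?thesis .
qed

end

lemma ricci_split:
  "ricci G b d z = (\<Sum>a\<in>UNIV. pd a (christoffel G a d b) z) - (\<Sum>a\<in>UNIV. pd d (christoffel G a a b) z)
     + (\<Sum>a\<in>UNIV. \<Sum>e\<in>UNIV. christoffel G a a e z * christoffel G e d b z)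
     - (\<Sum>a\<in>UNIV. \<Sum>e\<in>UNIV. christoffel G a d e z * christoffel G e a b z)"
  unfolding ricci_def riemann_def by (simp add: sum.distrib sum_subtractf)

lemma pd_negmultc:
  fixes f :: "real^'k::finite \<Rightarrow> real"
  assumes "f differentiable (at x)"
  shows "pd i (\<lambda>x. - (f x * c)) x = - (pd i f x * c)"
proof -
  have e: "(\<lambda>x. - (f x * c)) = (\<lambda>x. - f x * c)" by simp
  have "pd i (\<lambda>x. - f x * c) x = pd i (\<lambda>x. - f x) x * c"
    by (rule pd_multc) (use assms in \<open>rule differentiable_minus\<close>)
  also have "\<dots> = - (pd i f x * c)" using pd_minus[OF assms] by simp
  finally show ?thesis unfolding e .
qed

context wsetting begin

lemma T1_LL:
  assumes z: "z \<in> prod_dom Xd Mn"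
  shows "(\<Sum>a\<in>UNIV. pd a (christoffel W a (Inl \<delta>) (Inl \<beta>)) z)
     = (\<Sum>\<alpha>\<in>UNIV. pd \<alpha> (christoffel gd \<alpha> \<delta> \<beta>) (ypart z))
       - gd (ypart z) $ \<delta> $ \<beta> * (\<Sum>m\<in>UNIV. pd m (hv gb A m) (xpart z))"
proof -
  have x: "xpart z \<in> Mn" using z by (simp add: prod_dom_def)
  show ?thesis
    by (simp add: sum_split pdGam_Inl[OF z] pdGam_Inr[OF z] pd_negmultc dhv[OF x]
        sum_negf sum_distrib_left mult.commute)
qed

lemma T2_LL:
  assumes z: "z \<in> prod_dom Xd Mn"
  shows "(\<Sum>a\<in>UNIV. pd (Inl \<delta>) (christoffel W a a (Inl \<beta>)) z)
     = (\<Sum>\<alpha>\<in>UNIV. pd \<delta> (christoffel gd \<alpha> \<alpha> \<beta>) (ypart z))"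
  by (simp add: sum_split pdGam_Inl[OF z])

lemma V_Inl:
  assumes z: "z \<in> prod_dom Xd Mn"
  shows "(\<Sum>a\<in>UNIV. christoffel W a a (Inl \<epsilon>) z) = (\<Sum>\<alpha>\<in>UNIV. christoffel gd \<alpha> \<alpha> \<epsilon> (ypart z))"
  by (simp add: sum_split Gam[OF z])

lemma V_Inr:
  assumes z: "z \<in> prod_dom Xd Mn"
  shows "(\<Sum>a\<in>UNIV. christoffel W a a (Inr k) z) =
     (\<Sum>m\<in>UNIV. christoffel gb m m k (xpart z)) + (real CARD('d) + real CARD('n)) * pd k A (xpart z)"
proof -
  have x: "xpart z \<in> Mn" using z by (simp add: prod_dom_def)
  have "(\<Sum>a\<in>UNIV. christoffel W a a (Inr k) z) =
     real CARD('d) * pd k A (xpart z) + ((\<Sum>m\<in>UNIV. christoffel gb m m k (xpart z)) + pd k A (xpart z)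
       + real CARD('n) * pd k A (xpart z) - (\<Sum>m\<in>UNIV. hv gb A m (xpart z) * gb (xpart z) $ m $ k))"
    by (simp add: sum_split Gam[OF z] sum.distrib sum_subtractf)
  also have "\<dots> = (\<Sum>m\<in>UNIV. christoffel gb m m k (xpart z)) + (real CARD('d) + real CARD('n)) * pd k A (xpart z)"
    by (simp add: hv_g[OF x] algebra_simps)
  finally show ?thesis .
qed

lemma T3_gen:
  fixes G :: "'a::finite \<Rightarrow> 'a \<Rightarrow> 'a \<Rightarrow> real"
  shows "(\<Sum>a\<in>UNIV. \<Sum>e\<in>UNIV. G a a e * G e d b) = (\<Sum>e\<in>UNIV. (\<Sum>a\<in>UNIV. G a a e) * G e d b)"
  by (subst sum.swap) (simp add: sum_distrib_right)

lemma T3_LL: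
  assumes z: "z \<in> prod_dom Xd Mn"
  shows "(\<Sum>a\<in>UNIV. \<Sum>e\<in>UNIV. christoffel W a a e z * christoffel W e (Inl \<delta>) (Inl \<beta>) z)
     = (\<Sum>\<epsilon>\<in>UNIV. (\<Sum>\<alpha>\<in>UNIV. christoffel gd \<alpha> \<alpha> \<epsilon> (ypart z)) * christoffel gd \<epsilon> \<delta> \<beta> (ypart z))
       - gd (ypart z) $ \<delta> $ \<beta> * ((\<Sum>k\<in>UNIV. (\<Sum>m\<in>UNIV. christoffel gb m m k (xpart z)) * hv gb A k (xpart z))
           + (real CARD('d) + real CARD('n)) * (\<Sum>k\<in>UNIV. pd k A (xpart z) * hv gb A k (xpart z)))"
proof -
  have "(\<Sum>a\<in>UNIV. \<Sum>e\<in>UNIV. christoffel W a a e z * christoffel W e (Inl \<delta>) (Inl \<beta>) z)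
      = (\<Sum>e\<in>UNIV. (\<Sum>a\<in>UNIV. christoffel W a a e z) * christoffel W e (Inl \<delta>) (Inl \<beta>) z)"
    by (rule T3_gen)
  also have "\<dots> = (\<Sum>\<epsilon>\<in>UNIV. (\<Sum>a\<in>UNIV. christoffel W a a (Inl \<epsilon>) z) * christoffel W (Inl \<epsilon>) (Inl \<delta>) (Inl \<beta>) z)
     + (\<Sum>k\<in>UNIV. (\<Sum>a\<in>UNIV. christoffel W a a (Inr k) z) * christoffel W (Inr k) (Inl \<delta>) (Inl \<beta>) z)"
    by (rule sum_split)
  also have "\<dots> = (\<Sum>\<epsilon>\<in>UNIV. (\<Sum>\<alpha>\<in>UNIV. christoffel gd \<alpha> \<alpha> \<epsilon> (ypart z)) * christoffel gd \<epsilon> \<delta> \<beta> (ypart z))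
     + (\<Sum>k\<in>UNIV. ((\<Sum>m\<in>UNIV. christoffel gb m m k (xpart z)) + (real CARD('d) + real CARD('n)) * pd k A (xpart z))
          * (- hv gb A k (xpart z) * gd (ypart z) $ \<delta> $ \<beta>))"
    unfolding V_Inl[OF z] V_Inr[OF z] by (simp only: Gam[OF z] Gt_simps)
  finally show ?thesis by (simp add: algebra_simps sum.distrib sum_subtractf sum_distrib_left sum_negf)
qed

lemma ifz_mult: "(if P then x else 0) * (y::real) = (if P then x * y else 0)" by simp
lemma mult_ifz: "(y::real) * (if P then x else 0) = (if P then y * x else 0)" by simp
lemma sum_ifz: "(\<Sum>k\<in>S. if P then f k else (0::real)) = (if P then (\<Sum>k\<in>S. f k) else 0)" by simp

lemma T4_LL:
  assumes z: "z \<in> prod_dom Xd Mn"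
  shows "(\<Sum>a\<in>UNIV. \<Sum>e\<in>UNIV. christoffel W a (Inl \<delta>) e z * christoffel W e a (Inl \<beta>) z)
     = (\<Sum>\<alpha>\<in>UNIV. \<Sum>\<epsilon>\<in>UNIV. christoffel gd \<alpha> \<delta> \<epsilon> (ypart z) * christoffel gd \<epsilon> \<alpha> \<beta> (ypart z))
       - 2 * gd (ypart z) $ \<delta> $ \<beta> * (\<Sum>k\<in>UNIV. pd k A (xpart z) * hv gb A k (xpart z))"
  apply (simp only: sum_split Gam[OF z] Gt_simps ifz_mult mult_ifz sum_ifz)
  apply (simp add: sum.distrib)
  apply (simp add: sum_negf sum_distrib_left algebra_simps)
  done

end

lemma ifz_mult2: "(if P then x else 0) * (y::real) = (if P then x * y else 0)" by simp
lemma mult_ifz2: "(y::real) * (if P then x else 0) = (if P then y * x else 0)" by simp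
lemma sum_ifz2: "(\<Sum>k\<in>S. if P then f k else (0::real)) = (if P then (\<Sum>k\<in>S. f k) else 0)" by simp

lemma XX:
  fixes G :: "'n::finite \<Rightarrow> 'n \<Rightarrow> 'n \<Rightarrow> real" and a h :: "'n \<Rightarrow> real" and g :: "'n \<Rightarrow> 'n \<Rightarrow> real"
  assumes hg: "\<And>k. (\<Sum>m\<in>UNIV. h m * g m k) = a k" and gs: "\<And>i j. g i j = g j i"
  shows "(\<Sum>m\<in>UNIV. \<Sum>j\<in>UNIV. (G m k j + (if m = j then a k else 0) + (if m = k then a j else 0) - h m * g k j)
            * (G j m n + (if j = n then a m else 0) + (if j = m then a n else 0) - h j * g m n))
   = (\<Sum>m\<in>UNIV. \<Sum>j\<in>UNIV. G m k j * G j m n) + (\<Sum>m\<in>UNIV. G m k n * a m) + a n * (\<Sum>m\<in>UNIV. G m k m)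
     - (\<Sum>m\<in>UNIV. \<Sum>j\<in>UNIV. G m k j * h j * g m n)
     + a k * (\<Sum>m\<in>UNIV. G m m n) + (\<Sum>j\<in>UNIV. a j * G j k n) - (\<Sum>m\<in>UNIV. \<Sum>j\<in>UNIV. h m * g k j * G j m n)
     + (real CARD('n) + 2) * a k * a n - 2 * (\<Sum>j\<in>UNIV. a j * h j) * g k n"
proof -
  have hg': "(\<Sum>m\<in>UNIV. h m * g k m) = a k" for k using hg[of k] by (simp add: gs)
  have e: "(G m k j + (if m = j then a k else 0) + (if m = k then a j else 0) - h m * g k j)
            * (G j m n + (if j = n then a m else 0) + (if j = m then a n else 0) - h j * g m n)
      = G m k j * G j m n + (if j = n then G m k j * a m else 0) + (if j = m then G m k j * a n else 0)
        - G m k j * h j * g m n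
        + (if m = j then a k * G j m n else 0) + (if m = k then a j * G j m n else 0) - h m * g k j * G j m n
        + (if m = j then (if j = n then a k * a m else 0) + a k * a n - a k * h j * g m n else 0)
        + (if m = k then (if j = n then a j * a m else 0) + (if j = m then a j * a n else 0) - a j * h j * g m n else 0)
        - (if j = n then h m * g k j * a m else 0) - (if j = m then h m * g k j * a n else 0)
        + h m * g k j * h j * g m n" for m j
    by (simp add: algebra_simps)
  have q1: "(\<Sum>m\<in>UNIV. \<Sum>j\<in>UNIV. h m * g k j * h j * g m n) = a k * a n"
  proof -
    have "(\<Sum>m\<in>UNIV. \<Sum>j\<in>UNIV. h m * g k j * h j * g m n) = (\<Sum>m\<in>UNIV. h m * g m n * (\<Sum>j\<in>UNIV. h j * g k j))"
      by (simp add: sum_distrib_left mult_ac)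
    also have "\<dots> = (\<Sum>m\<in>UNIV. h m * g m n) * a k" by (simp add: hg' sum_distrib_right)
    also have "\<dots> = a k * a n" by (simp add: hg)
    finally show ?thesis .
  qed
  have q2: "(\<Sum>m\<in>UNIV. h m * g k m * a n) = a k * a n"
    using hg' by (simp add: sum_distrib_right[symmetric])
  have q3: "(\<Sum>m\<in>UNIV. a k * h m * g m n) = a k * a n"
    using hg by (simp add: sum_distrib_left[symmetric] mult.assoc)
  have q4: "(\<Sum>m\<in>UNIV. h m * g k n * a m) = (\<Sum>j\<in>UNIV. a j * h j) * g k n"
    unfolding sum_distrib_right by (simp add: mult_ac)
  have q5: "(\<Sum>j\<in>UNIV. a j * h j * g k n) = (\<Sum>j\<in>UNIV. a j * h j) * g k n"
    unfolding sum_distrib_right ..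
  show ?thesis
    unfolding e
    apply (simp add: sum.distrib sum_subtractf sum_ifz2 q1 q2 q3 q4 q5)
    apply (simp add: algebra_simps sum_distrib_left)
    done
qed


lemma pd_ifz: "pd i (\<lambda>x. if P then f x else 0) x = (if P then pd i f x else 0)"
  by (cases P) simp_all

lemma diff_ifz: "f differentiable (at x) \<Longrightarrow> (\<lambda>x. if P then f x else (0::real)) differentiable (at x)"
  by (cases P) simp_all

context wsetting begin

lemma pdg_sym: "x \<in> Mn \<Longrightarrow> pd i (\<lambda>x. gb x $ a $ b) x = pd i (\<lambda>x. gb x $ b $ a) x"
  by (rule pd_cong_open[OF oM]) (auto simp: gb_sym)

lemma Gb_sym: "x \<in> Mn \<Longrightarrow> christoffel gb a b c x = christoffel gb a c b x"
  unfolding christoffel_def using pdg_sym[of x _ b c] by (simp add: algebra_simps)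

lemma gi: "x \<in> Mn \<Longrightarrow> (\<Sum>m\<in>UNIV. gb x $ m $ n * matrix_inv (gb x) $ m $ e) = (if n = e then 1 else 0)"
proof -
  assume x: "x \<in> Mn"
  have "(\<Sum>m\<in>UNIV. gb x $ m $ n * matrix_inv (gb x) $ m $ e) = (\<Sum>m\<in>UNIV. gb x $ n $ m * matrix_inv (gb x) $ m $ e)"
    by (rule sum.cong) (auto simp: gb_sym[OF x, of _ n])
  also have "\<dots> = (if n = e then 1 else 0)" by (rule inv_mult_right[OF gb_inv[OF x]])
  finally show ?thesis .
qed

lemma Gb_low: "x \<in> Mn \<Longrightarrow> (\<Sum>m\<in>UNIV. gb x $ m $ n * christoffel gb m k j x)
   = (pd k (\<lambda>x. gb x $ n $ j) x + pd j (\<lambda>x. gb x $ n $ k) x - pd n (\<lambda>x. gb x $ k $ j) x) / 2"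
proof -
  assume x: "x \<in> Mn"
  define P where "P e = pd k (\<lambda>x. gb x $ e $ j) x + pd j (\<lambda>x. gb x $ e $ k) x - pd e (\<lambda>x. gb x $ k $ j) x" for e
  have c: "christoffel gb m k j x = (\<Sum>e\<in>UNIV. matrix_inv (gb x) $ m $ e * P e) / 2" for m
    by (simp add: christoffel_def P_def)
  have "(\<Sum>m\<in>UNIV. gb x $ m $ n * christoffel gb m k j x)
      = (\<Sum>m\<in>UNIV. \<Sum>e\<in>UNIV. gb x $ m $ n * matrix_inv (gb x) $ m $ e * P e) / 2"
    by (simp add: c sum_divide_distrib sum_distrib_left mult.assoc)
  also have "\<dots> = (\<Sum>e\<in>UNIV. (\<Sum>m\<in>UNIV. gb x $ m $ n * matrix_inv (gb x) $ m $ e) * P e) / 2"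
    by (subst sum.swap) (simp add: sum_distrib_right)
  also have "\<dots> = P n / 2" by (simp add: gi[OF x] ifz_mult2)
  finally show ?thesis by (simp add: P_def)
qed

lemma low_id: "x \<in> Mn \<Longrightarrow>
  (\<Sum>m\<in>UNIV. \<Sum>j\<in>UNIV. christoffel gb m k j x * hv gb A j x * gb x $ m $ n)
  + (\<Sum>m\<in>UNIV. \<Sum>j\<in>UNIV. hv gb A m x * gb x $ k $ j * christoffel gb j m n x)
  = (\<Sum>m\<in>UNIV. hv gb A m x * pd m (\<lambda>x. gb x $ k $ n) x)"
proof -
  assume x: "x \<in> Mn"
  have f1: "(\<Sum>m\<in>UNIV. \<Sum>j\<in>UNIV. christoffel gb m k j x * hv gb A j x * gb x $ m $ n)
     = (\<Sum>j\<in>UNIV. hv gb A j x * ((pd k (\<lambda>x. gb x $ n $ j) x + pd j (\<lambda>x. gb x $ n $ k) x - pd n (\<lambda>x. gb x $ k $ j) x) / 2))"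
  proof -
    have "(\<Sum>m\<in>UNIV. \<Sum>j\<in>UNIV. christoffel gb m k j x * hv gb A j x * gb x $ m $ n)
       = (\<Sum>j\<in>UNIV. hv gb A j x * (\<Sum>m\<in>UNIV. gb x $ m $ n * christoffel gb m k j x))"
      by (subst sum.swap) (simp add: sum_distrib_left mult_ac)
    then show ?thesis by (simp add: Gb_low[OF x])
  qed
  have f2: "(\<Sum>m\<in>UNIV. \<Sum>j\<in>UNIV. hv gb A m x * gb x $ k $ j * christoffel gb j m n x)
     = (\<Sum>m\<in>UNIV. hv gb A m x * ((pd m (\<lambda>x. gb x $ k $ n) x + pd n (\<lambda>x. gb x $ k $ m) x - pd k (\<lambda>x. gb x $ m $ n) x) / 2))"
  proof -
    have q: "(\<Sum>j\<in>UNIV. gb x $ k $ j * christoffel gb j m n x) = (\<Sum>j\<in>UNIV. gb x $ j $ k * christoffel gb j m n x)" for m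
      by (rule sum.cong) (auto simp: gb_sym[OF x, of k])
    have "(\<Sum>m\<in>UNIV. \<Sum>j\<in>UNIV. hv gb A m x * gb x $ k $ j * christoffel gb j m n x)
       = (\<Sum>m\<in>UNIV. hv gb A m x * (\<Sum>j\<in>UNIV. gb x $ k $ j * christoffel gb j m n x))"
      by (simp add: sum_distrib_left mult.assoc)
    also have "\<dots> = (\<Sum>m\<in>UNIV. hv gb A m x * (\<Sum>j\<in>UNIV. gb x $ j $ k * christoffel gb j m n x))"
      by (simp only: q)
    finally have "(\<Sum>m\<in>UNIV. \<Sum>j\<in>UNIV. hv gb A m x * gb x $ k $ j * christoffel gb j m n x)
       = (\<Sum>m\<in>UNIV. hv gb A m x * (\<Sum>j\<in>UNIV. gb x $ j $ k * christoffel gb j m n x))" .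
    then show ?thesis by (simp add: Gb_low[OF x])
  qed
  have "(\<Sum>j\<in>UNIV. hv gb A j x * ((pd k (\<lambda>x. gb x $ n $ j) x + pd j (\<lambda>x. gb x $ n $ k) x - pd n (\<lambda>x. gb x $ k $ j) x) / 2))
     + (\<Sum>m\<in>UNIV. hv gb A m x * ((pd m (\<lambda>x. gb x $ k $ n) x + pd n (\<lambda>x. gb x $ k $ m) x - pd k (\<lambda>x. gb x $ m $ n) x) / 2))
     = (\<Sum>m\<in>UNIV. hv gb A m x * ((pd k (\<lambda>x. gb x $ n $ m) x + pd m (\<lambda>x. gb x $ n $ k) x - pd n (\<lambda>x. gb x $ k $ m) x) / 2)
         + hv gb A m x * ((pd m (\<lambda>x. gb x $ k $ n) x + pd n (\<lambda>x. gb x $ k $ m) x - pd k (\<lambda>x. gb x $ m $ n) x) / 2))"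
    by (simp add: sum.distrib)
  also have "\<dots> = (\<Sum>m\<in>UNIV. hv gb A m x * pd m (\<lambda>x. gb x $ k $ n) x)"
  proof (rule sum.cong)
    fix m
    have "pd k (\<lambda>x. gb x $ n $ m) x = pd k (\<lambda>x. gb x $ m $ n) x" by (rule pdg_sym[OF x])
    moreover have "pd m (\<lambda>x. gb x $ n $ k) x = pd m (\<lambda>x. gb x $ k $ n) x" by (rule pdg_sym[OF x])
    ultimately show "hv gb A m x * ((pd k (\<lambda>x. gb x $ n $ m) x + pd m (\<lambda>x. gb x $ n $ k) x - pd n (\<lambda>x. gb x $ k $ m) x) / 2)
         + hv gb A m x * ((pd m (\<lambda>x. gb x $ k $ n) x + pd n (\<lambda>x. gb x $ k $ m) x - pd k (\<lambda>x. gb x $ m $ n) x) / 2)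
       = hv gb A m x * pd m (\<lambda>x. gb x $ k $ n) x"
      by (simp add: field_simps)
  qed simp
  finally show ?thesis using f1 f2 by simp
qed

lemma T1_RR:
  assumes z: "z \<in> prod_dom Xd Mn"
  shows "(\<Sum>a\<in>UNIV. pd a (christoffel W a (Inr k) (Inr n)) z)
     = (\<Sum>m\<in>UNIV. pd m (christoffel gb m k n) (xpart z)) + pd n (pd k A) (xpart z) + pd k (pd n A) (xpart z)
       - (\<Sum>m\<in>UNIV. pd m (hv gb A m) (xpart z)) * gb (xpart z) $ k $ n
       - (\<Sum>m\<in>UNIV. hv gb A m (xpart z) * pd m (\<lambda>x. gb x $ k $ n) (xpart z))"
proof -
  let ?x = "xpart z"
  have x: "?x \<in> Mn" using z by (simp add: prod_dom_def)
  have e: "pd m (\<lambda>x. christoffel gb m k n x + (if m = n then pd k A x else 0) + (if m = k then pd n A x else 0)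
             - hv gb A m x * gb x $ k $ n) ?x
      = pd m (christoffel gb m k n) ?x + (if m = n then pd m (pd k A) ?x else 0) + (if m = k then pd m (pd n A) ?x else 0)
        - (pd m (hv gb A m) ?x * gb ?x $ k $ n + hv gb A m ?x * pd m (\<lambda>x. gb x $ k $ n) ?x)" for m
    apply (subst pd_diff)
      apply (intro differentiable_add diff_ifz dGb[OF x] ddA[OF x])
     apply (intro differentiable_mult dhv[OF x] dgb[OF x])
    apply (subst pd_add)
      apply (intro differentiable_add diff_ifz dGb[OF x] ddA[OF x])
     apply (intro diff_ifz ddA[OF x])
    apply (subst pd_add)
      apply (intro dGb[OF x])
     apply (intro diff_ifz ddA[OF x])
    apply (subst pd_mult)
      apply (intro dhv[OF x])
     apply (intro dgb[OF x])
    apply (simp add: pd_ifz)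
    done
  show ?thesis
    by (simp add: sum_split pdGam_Inl[OF z] pdGam_Inr[OF z] e sum.distrib sum_subtractf sum_distrib_right)
qed

lemma T2_RR:
  assumes z: "z \<in> prod_dom Xd Mn"
  shows "(\<Sum>a\<in>UNIV. pd (Inr k) (christoffel W a a (Inr n)) z)
     = (\<Sum>m\<in>UNIV. pd k (christoffel gb m m n) (xpart z)) + (real CARD('d) + real CARD('n)) * pd k (pd n A) (xpart z)"
proof -
  let ?x = "xpart z" and ?y = "ypart z"
  have x: "?x \<in> Mn" using z by (simp add: prod_dom_def)
  have e1: "pd k (\<lambda>x. Gt gd gb A (Inl \<alpha>) (Inl \<alpha>) (Inr n) ?y x) ?x = pd k (pd n A) ?x" for \<alpha>
    by simp
  have e2: "pd k (\<lambda>x. Gt gd gb A (Inr m) (Inr m) (Inr n) ?y x) ?x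
     = pd k (christoffel gb m m n) ?x + (if m = n then pd k (pd m A) ?x else 0) + pd k (pd n A) ?x
       - pd k (\<lambda>x. hv gb A m x * gb x $ m $ n) ?x" for m
    apply (simp only: Gt_simps simp_thms if_True)
    apply (subst pd_diff)
      apply (intro differentiable_add diff_ifz dGb[OF x] ddA[OF x])
     apply (intro differentiable_mult dhv[OF x] dgb[OF x])
    apply (subst pd_add)
      apply (intro differentiable_add diff_ifz dGb[OF x] ddA[OF x])
     apply (intro ddA[OF x])
    apply (subst pd_add)
      apply (intro dGb[OF x])
     apply (intro diff_ifz ddA[OF x])
    apply (simp add: pd_ifz)
    done
  have e3: "(\<Sum>m\<in>UNIV. pd k (\<lambda>x. hv gb A m x * gb x $ m $ n) ?x) = pd k (pd n A) ?x"
  proof -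
    have "(\<Sum>m\<in>UNIV. pd k (\<lambda>x. hv gb A m x * gb x $ m $ n) ?x) = pd k (\<lambda>x. \<Sum>m\<in>UNIV. hv gb A m x * gb x $ m $ n) ?x"
      by (rule pd_sum[symmetric]) (auto intro!: differentiable_mult dhv[OF x] dgb[OF x])
    also have "\<dots> = pd k (pd n A) ?x"
      by (rule pd_cong_open[OF oM x]) (simp add: hv_g)
    finally show ?thesis .
  qed
  have "(\<Sum>a\<in>UNIV. pd (Inr k) (christoffel W a a (Inr n)) z)
     = (\<Sum>\<alpha>\<in>UNIV. pd k (\<lambda>x. Gt gd gb A (Inl \<alpha>) (Inl \<alpha>) (Inr n) ?y x) ?x)
       + (\<Sum>m\<in>UNIV. pd k (\<lambda>x. Gt gd gb A (Inr m) (Inr m) (Inr n) ?y x) ?x)"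
    by (simp only: sum_split pdGam_Inr[OF z])
  also have "\<dots> = real CARD('d) * pd k (pd n A) ?x + ((\<Sum>m\<in>UNIV. pd k (christoffel gb m m n) ?x)
       + pd k (pd n A) ?x + real CARD('n) * pd k (pd n A) ?x - pd k (pd n A) ?x)"
    unfolding e1 e2 by (simp add: sum.distrib sum_subtractf e3)
  finally show ?thesis by (simp add: algebra_simps)
qed

lemma T3_RR:
  assumes z: "z \<in> prod_dom Xd Mn"
  shows "(\<Sum>a\<in>UNIV. \<Sum>e\<in>UNIV. christoffel W a a e z * christoffel W e (Inr k) (Inr n) z)
     = (\<Sum>j\<in>UNIV. (\<Sum>m\<in>UNIV. christoffel gb m m j (xpart z)) * christoffel gb j k n (xpart z))
       + (\<Sum>m\<in>UNIV. christoffel gb m m n (xpart z)) * pd k A (xpart z)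
       + (\<Sum>m\<in>UNIV. christoffel gb m m k (xpart z)) * pd n A (xpart z)
       - (\<Sum>j\<in>UNIV. (\<Sum>m\<in>UNIV. christoffel gb m m j (xpart z)) * hv gb A j (xpart z)) * gb (xpart z) $ k $ n
       + (real CARD('d) + real CARD('n)) * ((\<Sum>j\<in>UNIV. pd j A (xpart z) * christoffel gb j k n (xpart z))
          + 2 * pd n A (xpart z) * pd k A (xpart z)
          - (\<Sum>j\<in>UNIV. pd j A (xpart z) * hv gb A j (xpart z)) * gb (xpart z) $ k $ n)"
proof -
  let ?x = "xpart z" and ?y = "ypart z"
  have "(\<Sum>a\<in>UNIV. \<Sum>e\<in>UNIV. christoffel W a a e z * christoffel W e (Inr k) (Inr n) z)
      = (\<Sum>e\<in>UNIV. (\<Sum>a\<in>UNIV. christoffel W a a e z) * christoffel W e (Inr k) (Inr n) z)"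
    by (rule T3_gen)
  also have "\<dots> = (\<Sum>\<epsilon>\<in>UNIV. (\<Sum>a\<in>UNIV. christoffel W a a (Inl \<epsilon>) z) * christoffel W (Inl \<epsilon>) (Inr k) (Inr n) z)
     + (\<Sum>j\<in>UNIV. (\<Sum>a\<in>UNIV. christoffel W a a (Inr j) z) * christoffel W (Inr j) (Inr k) (Inr n) z)"
    by (rule sum_split)
  also have "\<dots> = (\<Sum>j\<in>UNIV. ((\<Sum>m\<in>UNIV. christoffel gb m m j ?x) + (real CARD('d) + real CARD('n)) * pd j A ?x)
          * (christoffel gb j k n ?x + (if j = n then pd k A ?x else 0) + (if j = k then pd n A ?x else 0)
             - hv gb A j ?x * gb ?x $ k $ n))"
    unfolding V_Inl[OF z] V_Inr[OF z] by (simp only: Gam[OF z] Gt_simps mult_zero_right sum.neutral_const add_0)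
  finally show ?thesis
    by (simp add: algebra_simps sum.distrib sum_subtractf mult_ifz2 ifz_mult2 sum_distrib_left sum_distrib_right)
qed

lemma T4_RR:
  assumes z: "z \<in> prod_dom Xd Mn"
  shows "(\<Sum>a\<in>UNIV. \<Sum>e\<in>UNIV. christoffel W a (Inr k) e z * christoffel W e a (Inr n) z)
     = (\<Sum>m\<in>UNIV. \<Sum>j\<in>UNIV. christoffel gb m k j (xpart z) * christoffel gb j m n (xpart z))
       + (\<Sum>m\<in>UNIV. christoffel gb m k n (xpart z) * pd m A (xpart z))
       + pd n A (xpart z) * (\<Sum>m\<in>UNIV. christoffel gb m m k (xpart z))
       + pd k A (xpart z) * (\<Sum>m\<in>UNIV. christoffel gb m m n (xpart z))
       + (\<Sum>j\<in>UNIV. pd j A (xpart z) * christoffel gb j k n (xpart z))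
       - (\<Sum>m\<in>UNIV. hv gb A m (xpart z) * pd m (\<lambda>x. gb x $ k $ n) (xpart z))
       + (real CARD('d) + real CARD('n) + 2) * pd k A (xpart z) * pd n A (xpart z)
       - 2 * (\<Sum>j\<in>UNIV. pd j A (xpart z) * hv gb A j (xpart z)) * gb (xpart z) $ k $ n"
proof -
  let ?x = "xpart z" and ?y = "ypart z"
  have x: "?x \<in> Mn" using z by (simp add: prod_dom_def)
  have s1: "(\<Sum>a\<in>UNIV. \<Sum>e\<in>UNIV. christoffel W a (Inr k) e z * christoffel W e a (Inr n) z)
     = (\<Sum>\<alpha>\<in>UNIV. \<Sum>\<epsilon>\<in>UNIV. Gt gd gb A (Inl \<alpha>) (Inr k) (Inl \<epsilon>) ?y ?x * Gt gd gb A (Inl \<epsilon>) (Inl \<alpha>) (Inr n) ?y ?x)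
     + (\<Sum>\<alpha>\<in>UNIV. \<Sum>j\<in>UNIV. Gt gd gb A (Inl \<alpha>) (Inr k) (Inr j) ?y ?x * Gt gd gb A (Inr j) (Inl \<alpha>) (Inr n) ?y ?x)
     + ((\<Sum>m\<in>UNIV. \<Sum>\<epsilon>\<in>UNIV. Gt gd gb A (Inr m) (Inr k) (Inl \<epsilon>) ?y ?x * Gt gd gb A (Inl \<epsilon>) (Inr m) (Inr n) ?y ?x)
     + (\<Sum>m\<in>UNIV. \<Sum>j\<in>UNIV. Gt gd gb A (Inr m) (Inr k) (Inr j) ?y ?x * Gt gd gb A (Inr j) (Inr m) (Inr n) ?y ?x))"
    by (simp only: sum_split Gam[OF z] sum.distrib)
  have s2: "(\<Sum>\<alpha>\<in>UNIV. \<Sum>\<epsilon>\<in>UNIV. Gt gd gb A (Inl \<alpha>) (Inr k) (Inl \<epsilon>) ?y ?x * Gt gd gb A (Inl \<epsilon>) (Inl \<alpha>) (Inr n) ?y ?x)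
     = real CARD('d) * pd k A ?x * pd n A ?x"
    by (simp add: ifz_mult2 mult_ifz2)
  have s3: "(\<Sum>m\<in>UNIV. \<Sum>j\<in>UNIV. Gt gd gb A (Inr m) (Inr k) (Inr j) ?y ?x * Gt gd gb A (Inr j) (Inr m) (Inr n) ?y ?x)
   = (\<Sum>m\<in>UNIV. \<Sum>j\<in>UNIV. christoffel gb m k j ?x * christoffel gb j m n ?x) + (\<Sum>m\<in>UNIV. christoffel gb m k n ?x * pd m A ?x)
     + pd n A ?x * (\<Sum>m\<in>UNIV. christoffel gb m k m ?x)
     - (\<Sum>m\<in>UNIV. \<Sum>j\<in>UNIV. christoffel gb m k j ?x * hv gb A j ?x * gb ?x $ m $ n)
     + pd k A ?x * (\<Sum>m\<in>UNIV. christoffel gb m m n ?x) + (\<Sum>j\<in>UNIV. pd j A ?x * christoffel gb j k n ?x)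
     - (\<Sum>m\<in>UNIV. \<Sum>j\<in>UNIV. hv gb A m ?x * gb ?x $ k $ j * christoffel gb j m n ?x)
     + (real CARD('n) + 2) * pd k A ?x * pd n A ?x - 2 * (\<Sum>j\<in>UNIV. pd j A ?x * hv gb A j ?x) * gb ?x $ k $ n"
    unfolding Gt_simps
    by (rule XX[of "\<lambda>i. hv gb A i ?x" "\<lambda>i j. gb ?x $ i $ j" "\<lambda>i. pd i A ?x" "\<lambda>a b c. christoffel gb a b c ?x"])
       (rule hv_g[OF x], rule gb_sym[OF x])
  have s4: "(\<Sum>m\<in>UNIV. christoffel gb m k m ?x) = (\<Sum>m\<in>UNIV. christoffel gb m m k ?x)"
    by (rule sum.cong) (auto simp: Gb_sym[OF x])
  show ?thesis
    unfolding s1 s2 s3 s4 using low_id[OF x, of k n]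
    by (simp add: algebra_simps)
qed

definition Lq :: "real \<Rightarrow> real^'n \<Rightarrow> real" where
  "Lq D x = (\<Sum>m\<in>UNIV. pd m (hv gb A m) x) + (\<Sum>k\<in>UNIV. (\<Sum>m\<in>UNIV. christoffel gb m m k x) * hv gb A k x)
     + (D - 2) * (\<Sum>k\<in>UNIV. pd k A x * hv gb A k x)"

lemma ricci_LL:
  assumes z: "z \<in> prod_dom Xd Mn"
  shows "ricci W (Inl \<beta>) (Inl \<delta>) z = ricci gd \<beta> \<delta> (ypart z)
      - gd (ypart z) $ \<delta> $ \<beta> * Lq (real CARD('d) + real CARD('n)) (xpart z)"
  unfolding ricci_split[of W] ricci_split[of gd] T1_LL[OF z] T2_LL[OF z] T3_LL[OF z] T4_LL[OF z]
    T3_gen[of "\<lambda>a b c. christoffel gd a b c (ypart z)"] Lq_def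
  by (simp add: algebra_simps)

lemma ricci_RR:
  assumes z: "z \<in> prod_dom Xd Mn"
  shows "ricci W (Inr n) (Inr k) z = ricci gb n k (xpart z)
      - (real CARD('d) + real CARD('n) - 2) * (pd n (pd k A) (xpart z)
          - (\<Sum>j\<in>UNIV. christoffel gb j k n (xpart z) * pd j A (xpart z)) - pd k A (xpart z) * pd n A (xpart z))
      - Lq (real CARD('d) + real CARD('n)) (xpart z) * gb (xpart z) $ k $ n"
proof -
  have x: "xpart z \<in> Mn" using z by (simp add: prod_dom_def)
  show ?thesis
    unfolding ricci_split[of W] ricci_split[of gb] T1_RR[OF z] T2_RR[OF z] T3_RR[OF z] T4_RR[OF z]
      T3_gen[of "\<lambda>a b c. christoffel gb a b c (xpart z)"] Lq_def schwarzA[OF x, of k n]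
    by (simp add: algebra_simps sum_distrib_left sum_distrib_right sum.distrib sum_subtractf)
qed

end

lemma cs_form:
  fixes G :: "'n::finite \<Rightarrow> 'n \<Rightarrow> real" and v w :: "'n \<Rightarrow> real"
  assumes sym: "\<And>i j. G i j = G j i"
    and psd: "\<And>u. 0 \<le> (\<Sum>i\<in>UNIV. \<Sum>j\<in>UNIV. u i * G i j * u j)"
  shows "(\<Sum>i\<in>UNIV. \<Sum>j\<in>UNIV. v i * G i j * w j)^2
     \<le> (\<Sum>i\<in>UNIV. \<Sum>j\<in>UNIV. v i * G i j * v j) * (\<Sum>i\<in>UNIV. \<Sum>j\<in>UNIV. w i * G i j * w j)"
proof -
  define Bvv where "Bvv = (\<Sum>i\<in>UNIV. \<Sum>j\<in>UNIV. v i * G i j * v j)"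
  define Bvw where "Bvw = (\<Sum>i\<in>UNIV. \<Sum>j\<in>UNIV. v i * G i j * w j)"
  define Bww where "Bww = (\<Sum>i\<in>UNIV. \<Sum>j\<in>UNIV. w i * G i j * w j)"
  have swap: "(\<Sum>i\<in>UNIV. \<Sum>j\<in>UNIV. w i * G i j * v j) = Bvw"
    unfolding Bvw_def by (subst sum.swap) (simp add: sym mult_ac)
  have quad: "0 \<le> Bvv - 2 * t * Bvw + t^2 * Bww" for t
  proof -
    have "(\<Sum>i\<in>UNIV. \<Sum>j\<in>UNIV. (v i - t * w i) * G i j * (v j - t * w j))
       = (\<Sum>i\<in>UNIV. \<Sum>j\<in>UNIV. v i * G i j * v j - t * (w i * G i j * v j) - t * (v i * G i j * w j)
           + t^2 * (w i * G i j * w j))"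
      by (intro sum.cong refl) (simp add: algebra_simps power2_eq_square)
    also have "\<dots> = Bvv - t * (\<Sum>i\<in>UNIV. \<Sum>j\<in>UNIV. w i * G i j * v j) - t * Bvw + t^2 * Bww"
      unfolding Bvv_def Bvw_def Bww_def
      by (simp add: sum.distrib sum_subtractf sum_distrib_left)
    finally show ?thesis using psd[of "\<lambda>i. v i - t * w i"] swap by (simp add: mult_ac)
  qed
  have ww: "0 \<le> Bww" unfolding Bww_def by (rule psd)
  show ?thesis
  proof (cases "Bww = 0")
    case True
    have "Bvw = 0"
    proof (rule ccontr)
      assume ne: "Bvw \<noteq> 0"
      have "0 \<le> Bvv - 2 * ((Bvv + 1) / (2 * Bvw)) * Bvw" using quad[of "(Bvv + 1) / (2 * Bvw)"] True by simp
      also have "\<dots> = -1" using ne by (simp add: field_simps)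
      finally show False by simp
    qed
    then show ?thesis using True by (simp add: Bvw_def[symmetric] Bww_def[symmetric])
  next
    case False
    then have pos: "Bww > 0" using ww by simp
    have "0 \<le> Bvv - 2 * (Bvw / Bww) * Bvw + (Bvw / Bww)^2 * Bww" by (rule quad)
    also have "\<dots> = Bvv - Bvw^2 / Bww" using pos by (simp add: field_simps power2_eq_square)
    finally have "Bvw^2 / Bww \<le> Bvv" by simp
    then have "Bvw^2 \<le> Bvv * Bww" using pos by (simp add: pos_divide_le_eq)
    then show ?thesis by (simp add: Bvv_def Bvw_def Bww_def)
  qed
qed


lemma posdef_form:
  fixes G :: "real^'n::finite^'n"
  assumes "pos_def_mat G"
  shows "0 \<le> (\<Sum>i\<in>UNIV. \<Sum>j\<in>UNIV. u i * G $ i $ j * u j)"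
proof -
  define uv :: "real^'n" where "uv = (\<chi> i. u i)"
  have e: "uv \<bullet> (G *v uv) = (\<Sum>i\<in>UNIV. \<Sum>j\<in>UNIV. u i * G $ i $ j * u j)"
    by (simp add: uv_def inner_vec_def matrix_vector_mult_def sum_distrib_left mult_ac)
  show ?thesis
  proof (cases "uv = 0")
    case True
    then have "\<And>i. u i = 0" by (simp add: uv_def vec_eq_iff)
    then show ?thesis by simp
  next
    case False
    then show ?thesis using assms unfolding pos_def_mat_def e[symmetric] by (simp add: less_imp_le)
  qed
qed

lemma sym_mat_nth: "sym_mat M \<Longrightarrow> M $ i $ j = M $ j $ i"
  unfolding sym_mat_def by (metis transpose_def vec_lambda_beta)

context wsetting begin

lemma hh_eq:
  assumes x: "x \<in> Mn"
  shows "(\<Sum>a\<in>UNIV. \<Sum>b\<in>UNIV. hv gb A a x * gb x $ a $ b * hv gb A b x)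
      = (\<Sum>a\<in>UNIV. \<Sum>b\<in>UNIV. matrix_inv (gb x) $ a $ b * pd a A x * pd b A x)"
proof -
  let ?h = "\<lambda>m. hv gb A m x"
  have "(\<Sum>a\<in>UNIV. \<Sum>b\<in>UNIV. ?h a * gb x $ a $ b * ?h b) = (\<Sum>b\<in>UNIV. (\<Sum>a\<in>UNIV. ?h a * gb x $ a $ b) * ?h b)"
    by (subst sum.swap) (simp add: sum_distrib_right)
  also have "\<dots> = (\<Sum>b\<in>UNIV. pd b A x * ?h b)" by (simp add: hv_g[OF x])
  also have "\<dots> = (\<Sum>a\<in>UNIV. \<Sum>b\<in>UNIV. matrix_inv (gb x) $ a $ b * pd a A x * pd b A x)"
    by (simp add: hv_def sum_distrib_left mult_ac)
  finally show ?thesis .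
qed

lemma va_bound:
  assumes x: "x \<in> Mn" and pd: "pos_def_mat (gb x)"
  shows "(\<Sum>a\<in>UNIV. v a * pd a A x)^2 \<le> (\<Sum>a\<in>UNIV. \<Sum>b\<in>UNIV. v a * gb x $ a $ b * v b)
     * (\<Sum>a\<in>UNIV. \<Sum>b\<in>UNIV. matrix_inv (gb x) $ a $ b * pd a A x * pd b A x)"
proof -
  let ?h = "\<lambda>m. hv gb A m x" and ?a = "\<lambda>m. pd m A x"
  have va: "(\<Sum>a\<in>UNIV. v a * pd a A x) = (\<Sum>a\<in>UNIV. \<Sum>b\<in>UNIV. v a * gb x $ a $ b * ?h b)"
  proof -
    have "(\<Sum>a\<in>UNIV. v a * pd a A x) = (\<Sum>a\<in>UNIV. v a * (\<Sum>b\<in>UNIV. ?h b * gb x $ b $ a))"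
      by (simp add: hv_g[OF x])
    also have "\<dots> = (\<Sum>a\<in>UNIV. \<Sum>b\<in>UNIV. v a * (?h b * gb x $ b $ a))"
      by (simp add: sum_distrib_left)
    also have "\<dots> = (\<Sum>a\<in>UNIV. \<Sum>b\<in>UNIV. v a * gb x $ a $ b * ?h b)"
      apply (intro sum.cong refl)
      subgoal for a b using gb_sym[OF x, of b a] by simp
      done
    finally show ?thesis .
  qed
  have hh: "(\<Sum>a\<in>UNIV. \<Sum>b\<in>UNIV. ?h a * gb x $ a $ b * ?h b)
      = (\<Sum>a\<in>UNIV. \<Sum>b\<in>UNIV. matrix_inv (gb x) $ a $ b * pd a A x * pd b A x)"
  proof -
    have "(\<Sum>a\<in>UNIV. \<Sum>b\<in>UNIV. ?h a * gb x $ a $ b * ?h b) = (\<Sum>b\<in>UNIV. (\<Sum>a\<in>UNIV. ?h a * gb x $ a $ b) * ?h b)"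
      by (subst sum.swap) (simp add: sum_distrib_right)
    also have "\<dots> = (\<Sum>b\<in>UNIV. pd b A x * ?h b)" by (simp add: hv_g[OF x])
    also have "\<dots> = (\<Sum>a\<in>UNIV. \<Sum>b\<in>UNIV. matrix_inv (gb x) $ a $ b * pd a A x * pd b A x)"
      by (simp add: hv_def sum_distrib_left mult_ac)
    finally show ?thesis .
  qed
  show ?thesis
    unfolding va hh[symmetric]
    by (rule cs_form[of "\<lambda>i j. gb x $ i $ j"]) (auto simp: gb_sym[OF x] intro: posdef_form[OF pd])
qed

lemma hess_scale:
  assumes x: "x \<in> Mn"
  shows "hess gb (\<lambda>x'. c * A x') m k x = c * hess gb A m k x"
proof -
  have "pd k (\<lambda>x'. c * A x') x' = c * pd k A x'" if "x' \<in> Mn" for x'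
    by (rule pd_cmult[OF dA[OF that]])
  then have "pd m (pd k (\<lambda>x'. c * A x')) x = pd m (\<lambda>x'. c * pd k A x') x"
    by (intro pd_cong_open[OF oM x]) simp
  also have "\<dots> = c * pd m (pd k A) x" by (rule pd_cmult[OF ddA[OF x]])
  finally show ?thesis
    unfolding hess_def using pd_cmult[OF dA[OF x]] by (simp add: algebra_simps sum_distrib_left)
qed

lemma part1:
  fixes Tz :: "real^('d + 'n)^('d + 'n)"
  assumes z: "z \<in> prod_dom Xd Mn"
    and gdE: "\<And>a b. ricci gd a b (ypart z) = \<Lambda> * gd (ypart z) $ a $ b"
    and gdsym: "\<And>i j. gd (ypart z) $ i $ j = gd (ypart z) $ j $ i"
    and ein: "\<And>M N. ricci W M N z = \<kappa>\<^sup>2 / 2 * (Tz $ M $ N - W z $ M $ N * \<tau> / (D - 2))"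
    and D: "D = real CARD('d) + real CARD('n)" and D2: "D - 2 \<noteq> 0"
  shows "ricci gb m k (xpart z) - (D - 2) * hess gb A m k (xpart z) =
     \<Lambda> * gb (xpart z) $ m $ k - (D - 2) * pd m A (xpart z) * pd k A (xpart z)
     + \<kappa>\<^sup>2 / 2 * (Tz $ Inr m $ Inr k - gb (xpart z) $ m $ k * trace_d (gd (ypart z)) Tz / real CARD('d))"
proof -
  let ?x = "xpart z" and ?y = "ypart z"
  have x: "?x \<in> Mn" and y: "?y \<in> Xd" using z by (auto simp: prod_dom_def)
  define E where "E = exp (2 * A ?x)"
  define L where "L = Lq (real CARD('d) + real CARD('n)) ?x"
  define Td where "Td = trace_d (gd ?y) Tz"
  define dd where "dd = real CARD('d)"
  have dd0: "dd \<noteq> 0" by (simp add: dd_def)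
  have LL: "\<Lambda> * gd ?y $ \<beta> $ \<delta> - gd ?y $ \<beta> $ \<delta> * L
      = \<kappa>\<^sup>2 / 2 * (Tz $ Inl \<beta> $ Inl \<delta> - E * gd ?y $ \<beta> $ \<delta> * \<tau> / (D - 2))" for \<beta> \<delta>
    using ein[of "Inl \<beta>" "Inl \<delta>"] ricci_LL[OF z, of \<beta> \<delta>] gdE[of \<beta> \<delta>] gdsym[of \<delta> \<beta>]
    by (simp add: warped_eq E_def L_def)
  have tr1: "(\<Sum>\<beta>\<in>UNIV. \<Sum>\<delta>\<in>UNIV. matrix_inv (gd ?y) $ \<beta> $ \<delta> * gd ?y $ \<beta> $ \<delta>) = dd"
  proof -
    have "(\<Sum>\<beta>\<in>UNIV. \<Sum>\<delta>\<in>UNIV. matrix_inv (gd ?y) $ \<beta> $ \<delta> * gd ?y $ \<beta> $ \<delta>)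
       = (\<Sum>\<beta>\<in>UNIV. \<Sum>\<delta>\<in>UNIV. matrix_inv (gd ?y) $ \<beta> $ \<delta> * gd ?y $ \<delta> $ \<beta>)"
      by (simp add: gdsym[of _ "\<beta>"] gdsym)
    also have "\<dots> = (\<Sum>\<beta>\<in>(UNIV::'d set). 1::real)" by (simp add: inv_mult_left[OF gd_inv[OF y]])
    finally show ?thesis by (simp add: dd_def)
  qed
  have "(\<Sum>\<beta>\<in>UNIV. \<Sum>\<delta>\<in>UNIV. matrix_inv (gd ?y) $ \<beta> $ \<delta> * (\<Lambda> * gd ?y $ \<beta> $ \<delta> - gd ?y $ \<beta> $ \<delta> * L))
     = (\<Sum>\<beta>\<in>UNIV. \<Sum>\<delta>\<in>UNIV. matrix_inv (gd ?y) $ \<beta> $ \<delta> * (\<kappa>\<^sup>2 / 2 * (Tz $ Inl \<beta> $ Inl \<delta> - E * gd ?y $ \<beta> $ \<delta> * \<tau> / (D - 2))))"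
    by (simp only: LL)
  moreover have "(\<Sum>\<beta>\<in>UNIV. \<Sum>\<delta>\<in>UNIV. matrix_inv (gd ?y) $ \<beta> $ \<delta> * (\<Lambda> * gd ?y $ \<beta> $ \<delta> - gd ?y $ \<beta> $ \<delta> * L))
      = (\<Lambda> - L) * dd"
    unfolding tr1[symmetric] by (simp add: sum_distrib_left algebra_simps)
  moreover have "(\<Sum>\<beta>\<in>UNIV. \<Sum>\<delta>\<in>UNIV. matrix_inv (gd ?y) $ \<beta> $ \<delta> * (\<kappa>\<^sup>2 / 2 * (Tz $ Inl \<beta> $ Inl \<delta> - E * gd ?y $ \<beta> $ \<delta> * \<tau> / (D - 2))))
      = \<kappa>\<^sup>2 / 2 * (Td - E * \<tau> / (D - 2) * dd)"
    unfolding tr1[symmetric] Td_def trace_d_def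
    by (simp add: sum_distrib_left sum_subtractf algebra_simps sum_divide_distrib)
  ultimately have tr: "(\<Lambda> - L) * dd = \<kappa>\<^sup>2 / 2 * (Td - E * \<tau> / (D - 2) * dd)" by simp
  then have Leq: "L = \<Lambda> - \<kappa>\<^sup>2 / 2 * (Td / dd - E * \<tau> / (D - 2))"
    using dd0 by (simp add: field_simps)
  have RR: "ricci gb m k ?x - (D - 2) * (hess gb A m k ?x - pd k A ?x * pd m A ?x) - L * gb ?x $ m $ k
      = \<kappa>\<^sup>2 / 2 * (Tz $ Inr m $ Inr k - E * gb ?x $ m $ k * \<tau> / (D - 2))"
  proof -
    have h: "(\<Sum>j\<in>UNIV. christoffel gb j k m ?x * pd j A ?x) = (\<Sum>c\<in>UNIV. christoffel gb c m k ?x * pd c A ?x)"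
      by (rule sum.cong) (auto simp: Gb_sym[OF x])
    show ?thesis
      using ein[of "Inr m" "Inr k"] ricci_RR[OF z, of m k] gb_sym[OF x, of k m]
      unfolding h hess_def by (simp add: warped_eq E_def L_def D)
  qed
  have R: "ricci gb m k ?x = \<kappa>\<^sup>2 / 2 * Tz $ Inr m $ Inr k - \<kappa>\<^sup>2 / 2 * (E * gb ?x $ m $ k * \<tau> / (D - 2))
      + (D - 2) * (hess gb A m k ?x - pd k A ?x * pd m A ?x) + L * gb ?x $ m $ k"
    using RR by (simp add: right_diff_distrib)
  show ?thesis
    unfolding R Leq Td_def[symmetric] dd_def[symmetric]
    by (simp add: algebra_simps)
qed

end

theorem mainTheorem1:
  fixes gd :: "real^'d::finite \<Rightarrow> real^'d^'d"
    and gb :: "real^'n::finite \<Rightarrow> real^'n^'n"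
    and A :: "real^'n \<Rightarrow> real"
    and T :: "real^('d + 'n) \<Rightarrow> real^('d + 'n)^('d + 'n)"
    and Xd :: "(real^'d) set" and Mn :: "(real^'n) set"
    and \<Lambda> \<kappa> \<sigma> :: real
  defines "d \<equiv> real CARD('d)" and "n \<equiv> real CARD('n)" and "D \<equiv> real CARD('d) + real CARD('n)"
  assumes dim_d: "CARD('d) \<ge> 2" and dim_n: "CARD('n) \<ge> 2"
    and Ud_open: "open Xd" and Ud_ne: "Xd \<noteq> {}" and Ud_conn: "connected Xd"
    and Mn_open: "open Mn" and Mn_conn: "connected Mn"
    and Lneg: "\<Lambda> < 0" and kpos: "\<kappa> > 0"
    and gd_lor: "lorentzian_on Xd gd"
    and gd_maxsym: "\<forall>y\<in>Xd. \<forall>a b c e. riemann_low gd a b c e y =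
                       \<Lambda> / (d - 1) * (gd y $ a $ c * gd y $ b $ e - gd y $ a $ e * gd y $ b $ c)"
    and gd_einstein: "\<forall>y\<in>Xd. \<forall>a b. ricci gd a b y = \<Lambda> * gd y $ a $ b"
    and gb_riem: "riemannian_on Mn gb"
    and A_smooth: "coord_smooth_on Mn A"
    and T_sym: "\<forall>z\<in>prod_dom Xd Mn. sym_mat (T z)"
    and einstein: "\<forall>z\<in>prod_dom Xd Mn. \<forall>M N.
          ricci (warped_metric gd gb A) M N z =
            \<kappa>\<^sup>2 / 2 * (T z $ M $ N - warped_metric gd gb A z $ M $ N
                         * trace_wrt (warped_metric gd gb A z) (T z) / (D - 2))"
    and REC: "\<forall>z\<in>prod_dom Xd Mn.
          psd_form (\<lambda>m k. T z $ Inr m $ Inr k - gb (xpart z) $ m $ k * trace_d (gd (ypart z)) (T z) / d)"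
    and sigma_nonneg: "\<sigma> \<ge> 0"
    and sigma_bound: "\<forall>x\<in>Mn. (D - 2) * grad_norm gb A x \<le> \<sigma>"
  shows "(\<forall>z\<in>prod_dom Xd Mn. \<forall>m k.
            ricci gb m k (xpart z) - (D - 2) * hess gb A m k (xpart z) =
              \<Lambda> * gb (xpart z) $ m $ k
              - (D - 2) * pd m A (xpart z) * pd k A (xpart z)
              + \<kappa>\<^sup>2 / 2 * (T z $ Inr m $ Inr k
                             - gb (xpart z) $ m $ k * trace_d (gd (ypart z)) (T z) / d))
       \<and> (\<forall>x\<in>Mn. psd_form (\<lambda>m k.
            ricci gb m k x - hess gb (\<lambda>x'. (D - 2) * A x') m k x
            + (\<bar>\<Lambda>\<bar> + \<sigma>\<^sup>2 / (D - 2)) * gb x $ m $ k))"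
proof -
  have Dg: "D - 2 > 0" using dim_d dim_n unfolding D_def by simp
  have d0: "d > 0" using dim_d unfolding d_def by simp
  have gd_sm: "smooth_metric_on Xd gd" using gd_lor unfolding lorentzian_on_def by blast
  have gdinv: "invertible (gd y)" if yX: "y \<in> Xd" for y
  proof -
    obtain P :: "real^'d^'d" and i0 where "invertible P"
      "transpose P ** gd y ** P = (\<chi> a b. if a = b then (if a = i0 then -1 else 1) else 0)"
      using gd_lor yX unfolding lorentzian_on_def by blast
    then show ?thesis by (rule sylvester_invertible)
  qed
  have gdsym: "gd y $ i $ j = gd y $ j $ i" if "y \<in> Xd" for y i j
  proof -
    have "sym_mat (gd y)" using gd_lor that unfolding lorentzian_on_def by blast
    then show ?thesis by (rule sym_mat_nth)
  qed
  have gb_sm: "smooth_metric_on Mn gb" using gb_riem unfolding riemannian_on_def by blast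
  have gbpd: "pos_def_mat (gb x)" if "x \<in> Mn" for x
    using gb_riem that unfolding riemannian_on_def by blast
  have gbsym: "gb x $ i $ j = gb x $ j $ i" if "x \<in> Mn" for x i j
  proof -
    have "sym_mat (gb x)" using gb_riem that unfolding riemannian_on_def by blast
    then show ?thesis by (rule sym_mat_nth)
  qed
  interpret S: wsetting gd gb A Xd Mn
    by unfold_locales (auto simp: Ud_open Mn_open gd_sm gdinv gb_sm gbpd posdef_invertible gbsym A_smooth)
  have P1: "\<forall>z\<in>prod_dom Xd Mn. \<forall>m k.
            ricci gb m k (xpart z) - (D - 2) * hess gb A m k (xpart z) =
              \<Lambda> * gb (xpart z) $ m $ k
              - (D - 2) * pd m A (xpart z) * pd k A (xpart z)
              + \<kappa>\<^sup>2 / 2 * (T z $ Inr m $ Inr k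
                             - gb (xpart z) $ m $ k * trace_d (gd (ypart z)) (T z) / d)"
  proof (intro ballI allI)
    fix z m k assume z: "z \<in> prod_dom Xd Mn"
    have y: "ypart z \<in> Xd" using z by (simp add: prod_dom_def)
    show "ricci gb m k (xpart z) - (D - 2) * hess gb A m k (xpart z) =
              \<Lambda> * gb (xpart z) $ m $ k
              - (D - 2) * pd m A (xpart z) * pd k A (xpart z)
              + \<kappa>\<^sup>2 / 2 * (T z $ Inr m $ Inr k
                             - gb (xpart z) $ m $ k * trace_d (gd (ypart z)) (T z) / d)"
      unfolding d_def
      by (rule S.part1[OF z, of \<Lambda> \<kappa> "T z" "trace_wrt (warped_metric gd gb A z) (T z)" D])
         (use gd_einstein y gdsym einstein z Dg D_def in auto)
  qed
  have P2: "\<forall>x\<in>Mn. psd_form (\<lambda>m k.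
            ricci gb m k x - hess gb (\<lambda>x'. (D - 2) * A x') m k x
            + (\<bar>\<Lambda>\<bar> + \<sigma>\<^sup>2 / (D - 2)) * gb x $ m $ k)"
  proof
    fix x assume x: "x \<in> Mn"
    obtain y where y: "y \<in> Xd" using Ud_ne by blast
    define z where "z = join y x"
    have z: "z \<in> prod_dom Xd Mn" using x y by (simp add: z_def)
    have xz: "xpart z = x" and yz: "ypart z = y" by (simp_all add: z_def)
    define s where "s = \<sigma>\<^sup>2 / (D - 2)^2"
    define S where "S m k = T z $ Inr m $ Inr k - gb x $ m $ k * trace_d (gd y) (T z) / d" for m k
    have Spsd: "psd_form S"
    proof -
      have "psd_form (\<lambda>m k. T z $ Inr m $ Inr k - gb (xpart z) $ m $ k * trace_d (gd (ypart z)) (T z) / d)"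
        using REC z by blast
      then show ?thesis unfolding xz yz S_def[abs_def] .
    qed
    have Qe: "ricci gb m k x - hess gb (\<lambda>x'. (D - 2) * A x') m k x + (\<bar>\<Lambda>\<bar> + \<sigma>\<^sup>2 / (D - 2)) * gb x $ m $ k
        = (D - 2) * s * gb x $ m $ k - (D - 2) * (pd m A x * pd k A x) + \<kappa>\<^sup>2 / 2 * S m k" for m k
    proof -
      have "ricci gb m k x - (D - 2) * hess gb A m k x = \<Lambda> * gb x $ m $ k - (D - 2) * pd m A x * pd k A x
              + \<kappa>\<^sup>2 / 2 * S m k"
        using P1[rule_format, OF z, of m k] unfolding S_def xz yz .
      moreover have "hess gb (\<lambda>x'. (D - 2) * A x') m k x = (D - 2) * hess gb A m k x"
        by (rule S.hess_scale[OF x])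
      moreover have "\<bar>\<Lambda>\<bar> = - \<Lambda>" using Lneg by simp
      moreover have "(D - 2) * s = \<sigma>\<^sup>2 / (D - 2)" using Dg by (simp add: s_def power2_eq_square)
      ultimately show ?thesis by (simp add: algebra_simps)
    qed
    show "psd_form (\<lambda>m k. ricci gb m k x - hess gb (\<lambda>x'. (D - 2) * A x') m k x
            + (\<bar>\<Lambda>\<bar> + \<sigma>\<^sup>2 / (D - 2)) * gb x $ m $ k)"
      unfolding psd_form_def Qe
    proof
      fix v :: "real^'n"
      define Bvv where "Bvv = (\<Sum>a\<in>UNIV. \<Sum>b\<in>UNIV. v $ a * gb x $ a $ b * v $ b)"
      define va where "va = (\<Sum>a\<in>UNIV. v $ a * pd a A x)"
      define vS where "vS = (\<Sum>a\<in>UNIV. \<Sum>b\<in>UNIV. v $ a * S a b * v $ b)"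
      define Q0 where "Q0 = (\<Sum>a\<in>UNIV. \<Sum>b\<in>UNIV. matrix_inv (gb x) $ a $ b * pd a A x * pd b A x)"
      have sq: "va^2 = (\<Sum>a\<in>UNIV. \<Sum>b\<in>UNIV. v $ a * (pd a A x * pd b A x) * v $ b)"
        unfolding va_def power2_eq_square sum_product by (simp add: mult_ac)
      have expand: "(\<Sum>a\<in>UNIV. \<Sum>b\<in>UNIV. v $ a * ((D - 2) * s * gb x $ a $ b - (D - 2) * (pd a A x * pd b A x)
              + \<kappa>\<^sup>2 / 2 * S a b) * v $ b)
          = (D - 2) * s * Bvv - (D - 2) * va^2 + \<kappa>\<^sup>2 / 2 * vS"
      proof -
        have "(\<Sum>a\<in>UNIV. \<Sum>b\<in>UNIV. v $ a * ((D - 2) * s * gb x $ a $ b - (D - 2) * (pd a A x * pd b A x)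
              + \<kappa>\<^sup>2 / 2 * S a b) * v $ b)
          = (\<Sum>a\<in>UNIV. \<Sum>b\<in>UNIV. (D - 2) * s * (v $ a * gb x $ a $ b * v $ b)
              - (D - 2) * (v $ a * (pd a A x * pd b A x) * v $ b) + \<kappa>\<^sup>2 / 2 * (v $ a * S a b * v $ b))"
          by (intro sum.cong refl) (simp add: algebra_simps)
        also have "\<dots> = (D - 2) * s * Bvv - (D - 2) * va^2 + \<kappa>\<^sup>2 / 2 * vS"
          unfolding sq Bvv_def vS_def by (simp add: sum.distrib sum_subtractf sum_distrib_left)
        finally show ?thesis .
      qed
      have vS0: "0 \<le> vS" using Spsd unfolding psd_form_def vS_def by blast
      have Bvv0: "0 \<le> Bvv" unfolding Bvv_def by (rule posdef_form[OF gbpd[OF x]])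
      have Q00: "0 \<le> Q0" unfolding Q0_def S.hh_eq[OF x, symmetric] by (rule posdef_form[OF gbpd[OF x]])
      have "(D - 2) * sqrt Q0 \<le> \<sigma>" using sigma_bound x unfolding grad_norm_def Q0_def by blast
      then have "sqrt Q0 \<le> \<sigma> / (D - 2)" using Dg by (simp add: field_simps)
      then have "(sqrt Q0)^2 \<le> (\<sigma> / (D - 2))^2" by (rule power_mono) (simp add: Q00)
      then have "Q0 \<le> (\<sigma> / (D - 2))^2" using Q00 by simp
      then have Qs: "Q0 \<le> s" by (simp add: s_def power_divide)
      have "va^2 \<le> Bvv * Q0" unfolding va_def Bvv_def Q0_def by (rule S.va_bound[OF x gbpd[OF x]])
      also have "\<dots> \<le> Bvv * s" using Qs Bvv0 by (rule mult_left_mono)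
      finally have "va^2 \<le> s * Bvv" by (simp add: mult.commute)
      then have "0 \<le> (D - 2) * (s * Bvv - va^2)" using Dg by simp
      moreover have "0 \<le> \<kappa>\<^sup>2 / 2 * vS" using vS0 by simp
      ultimately show "0 \<le> (\<Sum>a\<in>UNIV. \<Sum>b\<in>UNIV. v $ a * ((D - 2) * s * gb x $ a $ b - (D - 2) * (pd a A x * pd b A x)
              + \<kappa>\<^sup>2 / 2 * S a b) * v $ b)"
        unfolding expand by (simp add: algebra_simps)
    qed
  qed
  show ?thesis using P1 P2 by blast
qed

end
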